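(* Let $A_1,\dots,A_n:\mathbb{R}^d\rightrightarrows\mathbb{R}^d$ be maximal monotone, $B:\mathbb{R}^d\to\mathbb{R}^d$ monotone and $L$-Lipschitz ($L>0$), and assume $\mathcal{S}\neq\emptyset$. Run Algorithm SPS (described in the context) with $\tau>0$, $p^1$ with $\sum_{i=1}^{n+1}w_i^1=0$, and deterministic stepsizes $\alpha_k>0$, $0<\rho_k\le\bar\rho<1/L$. Suppose that almost surely for every $k$, $\mathbb{E}[\epsilon^k\mid\mathcal{F}_k]=0$, $\mathbb{E}[e^k\mid\mathcal{F}_k]=0$, $\mathbb{E}[\|\epsilon^k\|^2\mid\mathcal{F}_k]\le N_1+N_2\|B(z^k)\|^2$, $\mathbb{E}[\|e^k\|^2\mid\mathcal{F}_k,\mathcal{E}_k]\le N_3+N_4\|B(x_{n+1}^k)\|^2$, with $0\le N_j<\infty$, and let $N=\max_{j}N_j$. Let $$T_k=\frac{\tau}{\bar\rho}\sum_{i=1}^n\|y_i^k-w_i^k\|^2+\frac{1}{\bar\rho\tau}\sum_{i=1}^n\|z^k-x_i^k\|^2+2(1-\bar\rho L)\|B(z^k)-w_{n+1}^k\|^2.$$ Then for every $p^*=(z^*,w_1^*,\dots,w_{n+1}^* )\in\mathcal{S}$, with probability one, for all $k$, $$\mathbb{E}[\|p^{k+1}-p^*\|^2\mid\mathcal{F}_k]\le(1+C_1\alpha_k^2+C_3\alpha_k\rho_k^2)\|p^k-p^*\|^2-\alpha_k\rho_kT_k+C_2\alpha_k^2+C_4\alpha_k\rho_k^2,$$ where $$C_1=24(1+10\bar\rho^2)(n+1)(L^2+1)^2(N+1)^2+8(n+1)\big(2\tau^2+6(n+1)+1+3(n+1)^2\tau^{-2}\big),$$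 $$C_2=16(N+1)\big[1+4\bar\rho^2(n+1)+9\bar\rho^2L^2(N+1)\big]\|B(z^* )\|^2+8\Big\|\sum_{i=1}^nw_i^*\Big\|^2+12\bar\rho^2N\big(2L^2(N+1)+n+1\big)+4N,$$ $$C_3=4NL^3,\qquad C_4=2NL(1+2\|B(z^* )\|^2).$$
   Context: $J_{\tau A}=(I+\tau A)^{-1}$. Extended solution set: $\mathcal{S}=\{(z,w_1,\dots,w_{n+1})\in\mathbb{R}^{(n+2)d}: w_i\in A_i(z)\ (i\le n),\ w_{n+1}=B(z),\ \sum_{i=1}^{n+1}w_i=0\}$. Algorithm SPS: given $p^k=(z^k,w_1^k,\dots,w_{n+1}^k)$, for $i=1,\dots,n$ set $t_i^k=z^k+\tau w_i^k$, $x_i^k=J_{\tau A_i}(t_i^k)$, $y_i^k=\tau^{-1}(t_i^k-x_i^k)$; then $r^k=B(z^k)+\epsilon^k$, $x_{n+1}^k=z^k-\rho_k(r^k-w_{n+1}^k)$, $y_{n+1}^k=B(x_{n+1}^k)+e^k$, where $\epsilon^k,e^k$ are $\mathbb{R}^d$-valued random noise variables; then $z^{k+1}=z^k-\alpha_k\sum_{i=1}^{n+1}y_i^k$ and $w_i^{k+1}=w_i^k-\alpha_k(x_i^k-\frac1{n+1}\sum_{j=1}^{n+1}x_j^k)$, $i=1,\dots,n+1$. $\mathcal{F}_k=\sigma(p^1,\dots,p^k)$, $\mathcal{E}_k=\sigma(\epsilon^k)$; norms on $\mathbb{R}^{(n+2)d}$ are Euclidean. *)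

theory Defs
  imports "HOL-Analysis.Analysis" "HOL-Probability.Probability"
begin

definition monotone_op :: "('a::real_inner \<Rightarrow> 'a set) \<Rightarrow> bool" where
  "monotone_op A \<longleftrightarrow> (\<forall>x y u v. u \<in> A x \<longrightarrow> v \<in> A y \<longrightarrow> inner (u - v) (x - y) \<ge> 0)"

definition maximal_monotone :: "('a::real_inner \<Rightarrow> 'a set) \<Rightarrow> bool" where
  "maximal_monotone A \<longleftrightarrow> monotone_op A \<and>
     (\<forall>A'. monotone_op A' \<and> (\<forall>x. A x \<subseteq> A' x) \<longrightarrow> A' = A)"

definition monotone_fun :: "('a::real_inner \<Rightarrow> 'a) \<Rightarrow> bool" where
  "monotone_fun B \<longleftrightarrow> (\<forall>x y. inner (B x - B y) (x - y) \<ge> 0)"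

text \<open>Resolvent J_{tau A} = (I + tau A)^{-1}: the point x with t in x + tau A(x).\<close>
definition resolvent :: "real \<Rightarrow> ('a::real_vector \<Rightarrow> 'a set) \<Rightarrow> 'a \<Rightarrow> 'a" where
  "resolvent \<tau> A t = (THE x. t \<in> (\<lambda>u. x + \<tau> *\<^sub>R u) ` A x)"

text \<open>Extended solution set S: the point (z, w_1, ..., w_{n+1}), w indexed by 1..n+1.\<close>
definition ext_sol :: "nat \<Rightarrow> (nat \<Rightarrow> 'a::real_vector \<Rightarrow> 'a set) \<Rightarrow> ('a \<Rightarrow> 'a) \<Rightarrow> 'a \<Rightarrow> (nat \<Rightarrow> 'a) \<Rightarrow> bool" where
  "ext_sol n A B zs ws \<longleftrightarrow> (\<forall>i\<in>{1..n}. ws i \<in> A i zs) \<and> ws (n+1) = B zs \<and> (\<Sum>i=1..n+1. ws i) = 0"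

definition ext_dist2 :: "nat \<Rightarrow> 'a::real_normed_vector \<Rightarrow> (nat \<Rightarrow> 'a) \<Rightarrow> 'a \<Rightarrow> (nat \<Rightarrow> 'a) \<Rightarrow> real" where
  "ext_dist2 n z w zs ws = (norm (z - zs))\<^sup>2 + (\<Sum>i=1..n+1. (norm (w i - ws i))\<^sup>2)"

definition gen_sigma :: "'m measure \<Rightarrow> ('m \<Rightarrow> 'a::topological_space) set \<Rightarrow> 'm measure" where
  "gen_sigma M Xs = sigma (space M) {X -` S \<inter> space M | X S. X \<in> Xs \<and> S \<in> sets borel}"

end

theory Submission
  imports Defs
begin

lemma DF_lemma:
  fixes P :: "('a::euclidean_space \<times> 'a) set"
  assumes finP: "finite P" and neP: "P \<noteq> {}"
    and mono: "\<And>a b a' b'. (a,b) \<in> P \<Longrightarrow> (a',b') \<in> P \<Longrightarrow> inner (b - b') (a - a') \<ge> 0"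
  shows "\<exists>x. \<forall>(a,b)\<in>P. inner (x + b) (x - a) \<le> 0"
proof -
  define C where "C = convex hull (fst ` P)"
  define v :: "'a \<times> 'a \<Rightarrow> 'a \<Rightarrow> real" where "v = (\<lambda>p x. max 0 (inner (x + snd p) (x - fst p)))"
  define S where "S = (\<lambda>x. \<Sum>p\<in>P. v p x)"
  define T where "T = (\<lambda>x. (1 / (1 + S x)) *\<^sub>R (x + (\<Sum>p\<in>P. v p x *\<^sub>R fst p)))"
  have vnn: "\<And>p x. v p x \<ge> 0" unfolding v_def by simp
  have Snn: "\<And>x. S x \<ge> 0" unfolding S_def using vnn by (simp add: sum_nonneg)
  have cC: "compact C" unfolding C_def using finP by (simp add: finite_imp_compact_convex_hull)
  have vC: "convex C" unfolding C_def by (simp add: convex_convex_hull)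
  have neC: "C \<noteq> {}" unfolding C_def using neP by simp
  have contv: "\<And>p. continuous_on UNIV (v p)" unfolding v_def
    by (intro continuous_intros)
  have contS: "continuous_on UNIV S" unfolding S_def
    by (intro continuous_intros contv)
  have contT: "continuous_on C T" unfolding T_def
    apply (intro continuous_intros continuous_on_subset[OF contS] continuous_on_subset[OF contv])
    using Snn by (auto simp: add_nonneg_eq_0_iff)
  have aC: "\<And>p. p \<in> P \<Longrightarrow> fst p \<in> C" unfolding C_def by (simp add: hull_inc)
  have TC: "T \<in> C \<rightarrow> C"
  proof
    fix x assume xC: "x \<in> C"
    show "T x \<in> C"
    proof (cases "S x = 0")
      case True
      then have "\<And>p. p \<in> P \<Longrightarrow> v p x = 0" unfolding S_def using finP vnn
        by (simp add: sum_nonneg_eq_0_iff)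
      then have "T x = x" unfolding T_def using True by simp
      then show ?thesis using xC by simp
    next
      case False
      then have Sp: "S x > 0" using Snn[of x] by linarith
      have yC: "(\<Sum>p\<in>P. (v p x / S x) *\<^sub>R fst p) \<in> C"
        apply (rule convex_sum[OF finP vC])
        using Sp vnn aC by (auto simp: sum_divide_distrib[symmetric] S_def)
      have "T x = (1 / (1 + S x)) *\<^sub>R x + (S x / (1 + S x)) *\<^sub>R (\<Sum>p\<in>P. (v p x / S x) *\<^sub>R fst p)"
        unfolding T_def using Sp by (simp add: scaleR_add_right scaleR_sum_right)
      moreover have "(1 / (1 + S x)) + (S x / (1 + S x)) = 1" using Sp by (simp add: field_simps)
      ultimately show ?thesis using convexD[OF vC xC yC] Sp by (simp add: add_pos_nonneg)
    qed
  qed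
  obtain x where xC: "x \<in> C" and fx: "T x = x" using brouwer[OF cC vC neC contT TC] by blast
  have eq: "S x *\<^sub>R x = (\<Sum>p\<in>P. v p x *\<^sub>R fst p)"
  proof -
    have "(1 + S x) *\<^sub>R T x = x + (\<Sum>p\<in>P. v p x *\<^sub>R fst p)"
      unfolding T_def using Snn[of x] by simp
    then have "(1 + S x) *\<^sub>R x = x + (\<Sum>p\<in>P. v p x *\<^sub>R fst p)" using fx by simp
    then show ?thesis by (simp add: algebra_simps)
  qed
  have S0: "S x = 0"
  proof (rule ccontr)
    assume "S x \<noteq> 0"
    then have Sp: "S x > 0" using Snn[of x] by linarith
    have vsq: "\<And>p. v p x * inner (x + snd p) (x - fst p) = (v p x)\<^sup>2"
      unfolding v_def by (simp add: max_def power2_eq_square)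
    have "\<exists>p\<in>P. v p x \<noteq> 0" using Sp unfolding S_def
      by (metis less_irrefl sum.neutral)
    then obtain p0 where p0: "p0 \<in> P" "v p0 x \<noteq> 0" by blast
    have pos: "(\<Sum>p\<in>P. v p x * inner (x + snd p) (x - fst p)) > 0"
      unfolding vsq
      apply (rule sum_pos2[OF finP p0(1)])
      using p0 by auto
    have "(\<Sum>p\<in>P. v p x * inner (x + snd p) (x - fst p))
        = (\<Sum>p\<in>P. v p x * inner x x - inner x (v p x *\<^sub>R fst p) + v p x * inner (snd p) (x - fst p))"
      by (rule sum.cong) (auto simp: algebra_simps inner_add_left inner_diff_right)
    also have "\<dots> = S x * inner x x - inner x (\<Sum>p\<in>P. v p x *\<^sub>R fst p) + (\<Sum>p\<in>P. v p x * inner (snd p) (x - fst p))"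
      by (simp add: sum.distrib sum_subtractf S_def sum_distrib_right inner_sum_right)
    also have "\<dots> = (\<Sum>p\<in>P. v p x * inner (snd p) (x - fst p))"
      by (simp add: eq[symmetric])
    finally have e1: "(\<Sum>p\<in>P. v p x * inner (x + snd p) (x - fst p)) = (\<Sum>p\<in>P. v p x * inner (snd p) (x - fst p))" .
    define W where "W = (\<Sum>p\<in>P. \<Sum>q\<in>P. v p x * v q x * inner (snd p) (fst q - fst p))"
    have xa: "\<And>p. S x *\<^sub>R (x - fst p) = (\<Sum>q\<in>P. v q x *\<^sub>R (fst q - fst p))"
    proof -
      fix p
      have "S x *\<^sub>R (x - fst p) = S x *\<^sub>R x - S x *\<^sub>R fst p" by (simp add: scaleR_diff_right)
      also have "\<dots> = (\<Sum>q\<in>P. v q x *\<^sub>R fst q) - (\<Sum>q\<in>P. v q x *\<^sub>R fst p)"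
        by (subst eq) (simp add: S_def scaleR_sum_left)
      finally show "S x *\<^sub>R (x - fst p) = (\<Sum>q\<in>P. v q x *\<^sub>R (fst q - fst p))"
        by (simp add: sum_subtractf scaleR_diff_right)
    qed
    have "S x * (\<Sum>p\<in>P. v p x * inner (snd p) (x - fst p)) = (\<Sum>p\<in>P. v p x * inner (snd p) (S x *\<^sub>R (x - fst p)))"
      by (simp add: sum_distrib_left algebra_simps)
    also have "\<dots> = W" unfolding W_def xa
      by (simp add: inner_sum_right sum_distrib_left algebra_simps)
    finally have e2: "S x * (\<Sum>p\<in>P. v p x * inner (snd p) (x - fst p)) = W" .
    have "W = (\<Sum>p\<in>P. \<Sum>q\<in>P. v q x * v p x * inner (snd q) (fst p - fst q))"
      unfolding W_def by (rule sum.swap)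
    then have "2 * W = (\<Sum>p\<in>P. \<Sum>q\<in>P. v p x * v q x * inner (snd p) (fst q - fst p))
        + (\<Sum>p\<in>P. \<Sum>q\<in>P. v q x * v p x * inner (snd q) (fst p - fst q))"
      by (simp add: W_def)
    also have "\<dots> = (\<Sum>p\<in>P. \<Sum>q\<in>P. - (v p x * v q x * inner (snd p - snd q) (fst p - fst q)))"
      by (simp add: sum.distrib[symmetric] algebra_simps inner_diff_left inner_diff_right)
    also have "\<dots> \<le> 0"
    proof -
      have "\<And>p q. p \<in> P \<Longrightarrow> q \<in> P \<Longrightarrow> v p x * v q x * inner (snd p - snd q) (fst p - fst q) \<ge> 0"
        using mono vnn by (metis mult_nonneg_nonneg prod.collapse)
      then show ?thesis by (simp add: sum_nonpos)
    qed
    finally have "W \<le> 0" by simp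
    with e1 e2 pos Sp show False
      by (metis linorder_not_le mult_pos_pos)
  qed
  then have "\<And>p. p \<in> P \<Longrightarrow> v p x = 0" unfolding S_def using finP vnn
    by (simp add: sum_nonneg_eq_0_iff)
  then have "\<And>a b. (a,b) \<in> P \<Longrightarrow> inner (x + b) (x - a) \<le> 0"
    unfolding v_def by (metis fst_conv snd_conv max.cobounded2 max_def)
  then show ?thesis by auto
qed

lemma bounded_quad_set:
  fixes a c :: "'a::euclidean_space"
  shows "bounded {x. inner (x + c) (x - a) \<le> 0}"
proof -
  define R where "R = max 1 (norm (c - a) + norm c * norm a)"
  have "\<And>x. inner (x + c) (x - a) \<le> 0 \<Longrightarrow> norm x \<le> R"
  proof -
    fix x assume h: "inner (x + c) (x - a) \<le> 0"
    have e: "inner (x + c) (x - a) = (norm x)\<^sup>2 + inner x (c - a) - inner c a"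
      by (simp add: inner_add_left inner_diff_right power2_norm_eq_inner inner_commute algebra_simps)
    have c1: "\<bar>inner x (c - a)\<bar> \<le> norm x * norm (c - a)" by (rule Cauchy_Schwarz_ineq2)
    have c2: "\<bar>inner c a\<bar> \<le> norm c * norm a" by (rule Cauchy_Schwarz_ineq2)
    have "(norm x)\<^sup>2 \<le> norm x * norm (c - a) + norm c * norm a"
      using h e c1 c2 abs_ge_self[of "inner c a"] abs_ge_minus_self[of "inner x (c - a)"] by linarith
    show "norm x \<le> R"
    proof (cases "norm x \<le> 1")
      case True then show ?thesis unfolding R_def by simp
    next
      case False
      have "norm c * norm a \<le> norm x * (norm c * norm a)"
        using False by (simp add: mult_le_cancel_right1 mult_nonneg_nonneg not_less)
      then have "norm x * norm x \<le> norm x * (norm (c - a) + norm c * norm a)"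
        using \<open>(norm x)\<^sup>2 \<le> _\<close> by (simp add: power2_eq_square algebra_simps)
      then have "norm x \<le> norm (c - a) + norm c * norm a" using False
      proof -
        have "norm x > 0" using False by linarith
        then show ?thesis using \<open>norm x * norm x \<le> _\<close> mult_le_cancel_left_pos[of "norm x"] by blast
      qed
      then show ?thesis unfolding R_def by simp
    qed
  qed
  then show ?thesis unfolding bounded_iff by blast
qed

lemma minty_exists:
  fixes A :: "'a::euclidean_space \<Rightarrow> 'a set"
  assumes mm: "maximal_monotone A" and tau: "\<tau> > 0"
  shows "\<exists>x. \<exists>u\<in>A x. t = x + \<tau> *\<^sub>R u"
proof -
  have mono: "monotone_op A" using mm unfolding maximal_monotone_def by simp
  define G where "G = {(a,b). b \<in> A a}"
  have Gne: "G \<noteq> {}"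
  proof
    assume "G = {}"
    then have e: "\<And>a. A a = {}" unfolding G_def by auto
    define A' :: "'a \<Rightarrow> 'a set" where "A' = (\<lambda>_. {0})"
    have "monotone_op A'" unfolding A'_def monotone_op_def by simp
    moreover have "\<forall>x. A x \<subseteq> A' x" using e by simp
    ultimately have "A' = A" using mm unfolding maximal_monotone_def by blast
    then show False using e unfolding A'_def by (metis empty_iff insertI1)
  qed
  then obtain a0 b0 where g0: "(a0,b0) \<in> G" by auto
  define K where "K = (\<lambda>p::'a\<times>'a. {x. inner (x + (\<tau> *\<^sub>R snd p - t)) (x - fst p) \<le> 0})"
  have clK: "\<And>p. closed (K p)" unfolding K_def
    by (intro closed_Collect_le continuous_intros)
  have cK0: "compact (K (a0,b0))"
    unfolding compact_eq_bounded_closed using clK[of "(a0,b0)"] bounded_quad_set[of "\<tau> *\<^sub>R b0 - t" a0]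
    by (simp add: K_def)
  have "K (a0,b0) \<inter> (\<Inter>p\<in>G. K p) \<noteq> {}"
  proof (rule compact_imp_fip_image[OF cK0 clK])
    fix I' assume fI: "finite I'" and sI: "I' \<subseteq> G"
    define P where "P = (\<lambda>p. (fst p, \<tau> *\<^sub>R snd p - t)) ` insert (a0,b0) I'"
    have "finite P" "P \<noteq> {}" unfolding P_def using fI by auto
    moreover have "\<And>a b a' b'. (a,b) \<in> P \<Longrightarrow> (a',b') \<in> P \<Longrightarrow> inner (b - b') (a - a') \<ge> 0"
    proof -
      fix a b a' b' assume "(a,b) \<in> P" "(a',b') \<in> P"
      then obtain p p' where pp: "p \<in> insert (a0,b0) I'" "p' \<in> insert (a0,b0) I'"
        "a = fst p" "b = \<tau> *\<^sub>R snd p - t" "a' = fst p'" "b' = \<tau> *\<^sub>R snd p' - t"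
        unfolding P_def image_iff by (metis (no_types, lifting) fst_conv snd_conv)
      then have "p \<in> G" "p' \<in> G" using sI g0 by auto
      then have "inner (snd p - snd p') (fst p - fst p') \<ge> 0"
        using mono unfolding monotone_op_def G_def by auto
      then have "\<tau> * inner (snd p - snd p') (fst p - fst p') \<ge> 0" using tau by simp
      moreover have "b - b' = \<tau> *\<^sub>R (snd p - snd p')" unfolding pp(4) pp(6) by (simp add: scaleR_diff_right)
      ultimately show "inner (b - b') (a - a') \<ge> 0" using pp(3,5) by (simp only: inner_scaleR_left)
    qed
    ultimately obtain x where x: "\<forall>(a,b)\<in>P. inner (x + b) (x - a) \<le> 0"
      using DF_lemma[of P] by blast
    have "x \<in> K (a0,b0) \<inter> (\<Inter>p\<in>I'. K p)"
      using x unfolding K_def P_def by auto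
    then show "K (a0,b0) \<inter> (\<Inter>p\<in>I'. K p) \<noteq> {}" by blast
  qed
  then obtain x where xK: "\<And>p. p \<in> G \<Longrightarrow> x \<in> K p" by blast
  define u where "u = (1/\<tau>) *\<^sub>R (t - x)"
  have tu: "t = x + \<tau> *\<^sub>R u" unfolding u_def using tau by simp
  have mon_u: "\<And>a b. b \<in> A a \<Longrightarrow> inner (u - b) (x - a) \<ge> 0"
  proof -
    fix a b assume "b \<in> A a"
    then have "inner (x + (\<tau> *\<^sub>R b - t)) (x - a) \<le> 0" using xK[of "(a,b)"] unfolding K_def G_def by auto
    moreover have "x + (\<tau> *\<^sub>R b - t) = - \<tau> *\<^sub>R (u - b)" unfolding u_def using tau
      by (simp add: algebra_simps)
    ultimately have "- \<tau> * inner (u - b) (x - a) \<le> 0" by simp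
    then show "inner (u - b) (x - a) \<ge> 0" using tau
      by (simp add: zero_le_mult_iff)
  qed
  define A' where "A' = (\<lambda>y. A y \<union> (if y = x then {u} else {}))"
  have "monotone_op A'"
    unfolding monotone_op_def A'_def
  proof (intro allI impI)
    fix x1 y1 u1 v1
    assume h1: "u1 \<in> A x1 \<union> (if x1 = x then {u} else {})" and h2: "v1 \<in> A y1 \<union> (if y1 = x then {u} else {})"
    show "inner (u1 - v1) (x1 - y1) \<ge> 0"
    proof -
      have c1: "u1 \<in> A x1 \<or> (x1 = x \<and> u1 = u)" using h1 by (auto split: if_splits)
      have c2: "v1 \<in> A y1 \<or> (y1 = x \<and> v1 = u)" using h2 by (auto split: if_splits)
      show ?thesis
        using c1 c2
      proof (elim disjE conjE)
        assume "u1 \<in> A x1" "v1 \<in> A y1" then show ?thesis using mono unfolding monotone_op_def by blast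
      next
        assume "u1 \<in> A x1" "y1 = x" "v1 = u"
        moreover have "inner (u1 - v1) (x1 - y1) = inner (u - u1) (x - x1)"
          unfolding \<open>y1 = x\<close> \<open>v1 = u\<close> by (simp add: inner_diff_left inner_diff_right)
        ultimately show ?thesis using mon_u[OF \<open>u1 \<in> A x1\<close>] by simp
      next
        assume "x1 = x" "u1 = u" "v1 \<in> A y1" then show ?thesis using mon_u by simp
      next
        assume "x1 = x" "u1 = u" "y1 = x" "v1 = u" then show ?thesis by simp
      qed
    qed
  qed
  moreover have "\<forall>y. A y \<subseteq> A' y" unfolding A'_def by auto
  ultimately have "A' = A" using mm unfolding maximal_monotone_def by blast
  then have "u \<in> A' x \<Longrightarrow> u \<in> A x" by simp
  then have "u \<in> A x" unfolding A'_def by simp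
  then show ?thesis using tu by blast
qed

lemma resolvent_unique:
  fixes A :: "'a::euclidean_space \<Rightarrow> 'a set"
  assumes mono: "monotone_op A" and tau: "\<tau> > 0"
    and h1: "u1 \<in> A x1" "t = x1 + \<tau> *\<^sub>R u1" and h2: "u2 \<in> A x2" "t = x2 + \<tau> *\<^sub>R u2"
  shows "x1 = x2"
proof -
  have m: "inner (u1 - u2) (x1 - x2) \<ge> 0" using mono h1 h2 unfolding monotone_op_def by blast
  have "x1 + \<tau> *\<^sub>R u1 = x2 + \<tau> *\<^sub>R u2" using h1(2) h2(2) by simp
  then have e: "x1 - x2 = - \<tau> *\<^sub>R (u1 - u2)" by (simp add: algebra_simps)
  have "inner (x1 - x2) (x1 - x2) = inner (- \<tau> *\<^sub>R (u1 - u2)) (x1 - x2)" by (subst e) (rule refl)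
  also have "\<dots> = - \<tau> * inner (u1 - u2) (x1 - x2)" by (rule inner_scaleR_left)
  finally have "inner (x1 - x2) (x1 - x2) \<le> 0" using m tau by (simp add: mult_nonneg_nonneg)
  then have "x1 - x2 = 0" using inner_ge_zero[of "x1 - x2"] inner_eq_zero_iff[of "x1 - x2"] by linarith
  then show ?thesis by simp
qed

lemma resolvent_spec:
  fixes A :: "'a::euclidean_space \<Rightarrow> 'a set"
  assumes mm: "maximal_monotone A" and tau: "\<tau> > 0"
  shows "\<exists>u\<in>A (resolvent \<tau> A t). t = resolvent \<tau> A t + \<tau> *\<^sub>R u"
proof -
  have mono: "monotone_op A" using mm unfolding maximal_monotone_def by simp
  obtain x u where xu: "u \<in> A x" "t = x + \<tau> *\<^sub>R u" using minty_exists[OF mm tau] by blast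
  have "resolvent \<tau> A t = x" unfolding resolvent_def
  proof (rule the_equality)
    show "t \<in> (\<lambda>u. x + \<tau> *\<^sub>R u) ` A x" using xu by blast
  next
    fix x' assume "t \<in> (\<lambda>u. x' + \<tau> *\<^sub>R u) ` A x'"
    then obtain u' where "u' \<in> A x'" "t = x' + \<tau> *\<^sub>R u'" by blast
    then show "x' = x" using resolvent_unique[OF mono tau _ _ xu] by blast
  qed
  then show ?thesis using xu by blast
qed

lemma resolvent_eq:
  fixes A :: "'a::euclidean_space \<Rightarrow> 'a set"
  assumes mm: "maximal_monotone A" and tau: "\<tau> > 0" and "u \<in> A x" 
  shows "resolvent \<tau> A (x + \<tau> *\<^sub>R u) = x"
proof -
  have mono: "monotone_op A" using mm unfolding maximal_monotone_def by simp
  obtain v where "v \<in> A (resolvent \<tau> A (x + \<tau> *\<^sub>R u))" "x + \<tau> *\<^sub>R u = resolvent \<tau> A (x + \<tau> *\<^sub>R u) + \<tau> *\<^sub>R v"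
    using resolvent_spec[OF mm tau] by blast
  then show ?thesis using resolvent_unique[OF mono tau _ _ assms(3)] by blast
qed

lemma nonexp_core:
  fixes xt xs u v t s :: "'a::real_inner"
  assumes m: "inner (u - v) (xt - xs) \<ge> 0" and tau: "\<tau> > 0"
    and ht: "t = xt + \<tau> *\<^sub>R u" and hs: "s = xs + \<tau> *\<^sub>R v"
  shows "norm (xt - xs) \<le> norm (t - s)" and "norm ((t - xt) - (s - xs)) \<le> norm (t - s)"
proof -
  define dx where "dx = xt - xs"
  define du where "du = u - v"
  have m': "inner du dx \<ge> 0" using m unfolding dx_def du_def .
  have ts: "t - s = dx + \<tau> *\<^sub>R du" unfolding dx_def du_def ht hs by (simp add: algebra_simps)
  have n: "(norm (t - s))\<^sup>2 = (norm dx)\<^sup>2 + 2 * \<tau> * inner du dx + \<tau>\<^sup>2 * (norm du)\<^sup>2"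
    unfolding ts power2_norm_eq_inner by (simp add: inner_add_left inner_add_right inner_commute power2_eq_square algebra_simps)
  have "(norm dx)\<^sup>2 \<le> (norm (t - s))\<^sup>2" using n m' tau by (simp add: add_nonneg_nonneg)
  then show "norm (xt - xs) \<le> norm (t - s)"
    unfolding dx_def by (simp add: power2_le_iff_abs_le)
  have "(t - xt) - (s - xs) = \<tau> *\<^sub>R du"
    unfolding du_def ht hs by (simp add: algebra_simps)
  moreover have "(norm (\<tau> *\<^sub>R du))\<^sup>2 \<le> (norm (t - s))\<^sup>2" using n m' tau
    by (simp add: power_mult_distrib add_nonneg_nonneg)
  ultimately show "norm ((t - xt) - (s - xs)) \<le> norm (t - s)"
    by (simp add: power2_le_iff_abs_le)
qed

lemma resolvent_nonexp:
  fixes A :: "'a::euclidean_space \<Rightarrow> 'a set"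
  assumes mm: "maximal_monotone A" and tau: "\<tau> > 0"
  shows "norm (resolvent \<tau> A t - resolvent \<tau> A s) \<le> norm (t - s)"
    and "norm ((t - resolvent \<tau> A t) - (s - resolvent \<tau> A s)) \<le> norm (t - s)"
proof -
  have mono: "monotone_op A" using mm unfolding maximal_monotone_def by simp
  obtain u where u: "u \<in> A (resolvent \<tau> A t)" "t = resolvent \<tau> A t + \<tau> *\<^sub>R u"
    using resolvent_spec[OF mm tau] by blast
  obtain v where v: "v \<in> A (resolvent \<tau> A s)" "s = resolvent \<tau> A s + \<tau> *\<^sub>R v"
    using resolvent_spec[OF mm tau] by blast
  have m: "inner (u - v) (resolvent \<tau> A t - resolvent \<tau> A s) \<ge> 0" using mono u v unfolding monotone_op_def by blast
  show "norm (resolvent \<tau> A t - resolvent \<tau> A s) \<le> norm (t - s)"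
    and "norm ((t - resolvent \<tau> A t) - (s - resolvent \<tau> A s)) \<le> norm (t - s)"
    using nonexp_core[OF m tau u(2) v(2)] by auto
qed


lemma norm_sub_scale_sq:
  fixes a b :: "'a::real_inner"
  shows "(norm (a - t *\<^sub>R b))\<^sup>2 = (norm a)\<^sup>2 - 2 * t * inner b a + t\<^sup>2 * (norm b)\<^sup>2"
  unfolding power2_norm_eq_inner by (simp add: inner_diff_left inner_diff_right inner_commute power2_eq_square algebra_simps)

lemma norm_add_sq_le:
  fixes a b :: "'a::real_inner"
  shows "(norm (a + b))\<^sup>2 \<le> 2 * (norm a)\<^sup>2 + 2 * (norm b)\<^sup>2"
proof -
  have "(norm (a + b))\<^sup>2 + (norm (a - b))\<^sup>2 = 2 * (norm a)\<^sup>2 + 2 * (norm b)\<^sup>2"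
    by (simp add: power2_norm_eq_inner inner_diff_left inner_diff_right inner_add_left inner_add_right inner_commute)
  then show ?thesis by (smt (verit) zero_le_power2)
qed

lemma sum_sq_dev_le:
  fixes d :: "nat \<Rightarrow> 'a::real_inner"
  assumes fin: "finite I" and card: "card I > 0"
  shows "(\<Sum>i\<in>I. (norm (d i - (1 / real (card I)) *\<^sub>R (\<Sum>j\<in>I. d j)))\<^sup>2) \<le> (\<Sum>i\<in>I. (norm (d i))\<^sup>2)"
proof -
  define c where "c = (1 / real (card I)) *\<^sub>R (\<Sum>j\<in>I. d j)"
  have sc: "(\<Sum>j\<in>I. d j) = real (card I) *\<^sub>R c" unfolding c_def using card by simp
  have "(\<Sum>i\<in>I. (norm (d i - c))\<^sup>2) = (\<Sum>i\<in>I. (norm (d i))\<^sup>2 - 2 * inner (d i) c + (norm c)\<^sup>2)"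
    by (rule sum.cong) (simp_all add: power2_norm_eq_inner inner_diff_left inner_diff_right inner_commute)
  also have "\<dots> = (\<Sum>i\<in>I. (norm (d i))\<^sup>2) - 2 * inner (\<Sum>j\<in>I. d j) c + real (card I) * (norm c)\<^sup>2"
    by (simp add: sum.distrib sum_subtractf sum_distrib_left inner_sum_left)
  also have "\<dots> = (\<Sum>i\<in>I. (norm (d i))\<^sup>2) - real (card I) * (norm c)\<^sup>2"
    unfolding sc by (simp add: power2_norm_eq_inner)
  also have "\<dots> \<le> (\<Sum>i\<in>I. (norm (d i))\<^sup>2)" by simp
  finally show ?thesis unfolding c_def .
qed

lemma step_pointwise:
  fixes z zs ep e :: "'a::real_inner" and w ws x y :: "nat \<Rightarrow> 'a" and B :: "'a \<Rightarrow> 'a"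
    and \<alpha> \<rho> \<tau> L :: real
  assumes n: "n \<ge> 1"
    and sw: "(\<Sum>i=1..n+1. w i) = 0" and sws: "(\<Sum>i=1..n+1. ws i) = 0" and wsB: "ws (n+1) = B zs"
    and tx: "\<And>i. i \<in> {1..n} \<Longrightarrow> z + \<tau> *\<^sub>R w i = x i + \<tau> *\<^sub>R y i"
    and mon: "\<And>i. i \<in> {1..n} \<Longrightarrow> inner (y i - ws i) (x i - zs) \<ge> 0"
    and xn: "x (n+1) = z - \<rho> *\<^sub>R ((B z + ep) - w (n+1))"
    and yn: "y (n+1) = B (x (n+1)) + e"
    and Bmon: "inner (B (x (n+1)) - B zs) (x (n+1) - zs) \<ge> 0"
    and Blip: "norm (B (x (n+1)) - B z) \<le> L * norm (x (n+1) - z)"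
    and al: "\<alpha> \<ge> 0" and rh: "\<rho> \<ge> 0" and L: "L \<ge> 0"
  shows "ext_dist2 n (z - \<alpha> *\<^sub>R (\<Sum>i=1..n+1. y i))
            (\<lambda>i. w i - \<alpha> *\<^sub>R (x i - (1 / real (n+1)) *\<^sub>R (\<Sum>j=1..n+1. x j))) zs ws
   \<le> ext_dist2 n z w zs ws - 2 * \<alpha> * \<tau> * (\<Sum>i=1..n. (norm (y i - w i))\<^sup>2)
      - 2 * \<alpha> * \<rho> * (1 - L * \<rho>) * (norm (B z - w (n+1)))\<^sup>2
      + \<alpha>\<^sup>2 * (2 * (norm ((\<Sum>i=1..n. y i - w i) + (B z - w (n+1))))\<^sup>2
               + \<tau>\<^sup>2 * (\<Sum>i=1..n. (norm (y i - w i))\<^sup>2)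
               + (4 * L\<^sup>2 + 1) * \<rho>\<^sup>2 * (norm (B z - w (n+1)))\<^sup>2)
      + inner ep ((- 2 * \<alpha> * \<rho> * (1 - 2 * L * \<rho>) + 2 * \<alpha>\<^sup>2 * (4 * L\<^sup>2 + 1) * \<rho>\<^sup>2) *\<^sub>R (B z - w (n+1)))
      + (2 * \<alpha> * L * \<rho>\<^sup>2 + \<alpha>\<^sup>2 * (4 * L\<^sup>2 + 1) * \<rho>\<^sup>2) * (norm ep)\<^sup>2
      + inner e ((- 2 * \<alpha>) *\<^sub>R (z - zs)) + 4 * \<alpha>\<^sup>2 * (norm e)\<^sup>2"
proof -
  define I where "I = {1..n+1}"
  define sy where "sy = (\<Sum>i\<in>I. y i)"
  define xb where "xb = (1 / real (n+1)) *\<^sub>R (\<Sum>j\<in>I. x j)"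
  define \<Gamma> where "\<Gamma> = B z - w (n+1)"
  define g where "g = \<Gamma> + ep"
  define SY where "SY = (\<Sum>i=1..n. (norm (y i - w i))\<^sup>2)"
  define V1 where "V1 = (\<Sum>i=1..n. y i - w i) + \<Gamma>"
  define V2 where "V2 = B (x (n+1)) - B z"
  define D where "D = ext_dist2 n z w zs ws"
  have finI: "finite I" unfolding I_def by simp
  have cardI: "card I = n + 1" unfolding I_def by simp
  have splitI: "\<And>f :: nat \<Rightarrow> 'b::comm_monoid_add. (\<Sum>i\<in>I. f i) = (\<Sum>i=1..n. f i) + f (n+1)"
    unfolding I_def by (simp add: sum.cl_ivl_Suc)
  have zx: "\<And>i. i \<in> {1..n} \<Longrightarrow> z - x i = \<tau> *\<^sub>R (y i - w i)"
  proof -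
    fix i assume "i \<in> {1..n}"
    from tx[OF this] show "z - x i = \<tau> *\<^sub>R (y i - w i)" by (simp add: algebra_simps)
  qed
  have zxn: "z - x (n+1) = \<rho> *\<^sub>R g" unfolding g_def \<Gamma>_def xn by (simp add: algebra_simps)
  have Qeq: "ext_dist2 n (z - \<alpha> *\<^sub>R sy) (\<lambda>i. w i - \<alpha> *\<^sub>R (x i - xb)) zs ws
     = D - 2 * \<alpha> * (inner sy (z - zs) + (\<Sum>i\<in>I. inner (x i - xb) (w i - ws i)))
         + \<alpha>\<^sup>2 * ((norm sy)\<^sup>2 + (\<Sum>i\<in>I. (norm (x i - xb))\<^sup>2))"
  proof -
    have a: "(norm (z - \<alpha> *\<^sub>R sy - zs))\<^sup>2 = (norm (z - zs))\<^sup>2 - 2 * \<alpha> * inner sy (z - zs) + \<alpha>\<^sup>2 * (norm sy)\<^sup>2"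
      using norm_sub_scale_sq[of "z - zs" \<alpha> sy] by (simp add: algebra_simps)
    have b: "\<And>i. (norm (w i - \<alpha> *\<^sub>R (x i - xb) - ws i))\<^sup>2 = (norm (w i - ws i))\<^sup>2 - 2 * \<alpha> * inner (x i - xb) (w i - ws i) + \<alpha>\<^sup>2 * (norm (x i - xb))\<^sup>2"
    proof -
      fix i
      have eq: "w i - \<alpha> *\<^sub>R (x i - xb) - ws i = (w i - ws i) - \<alpha> *\<^sub>R (x i - xb)" by (simp add: algebra_simps)
      show "(norm (w i - \<alpha> *\<^sub>R (x i - xb) - ws i))\<^sup>2 = (norm (w i - ws i))\<^sup>2 - 2 * \<alpha> * inner (x i - xb) (w i - ws i) + \<alpha>\<^sup>2 * (norm (x i - xb))\<^sup>2"
        unfolding eq by (rule norm_sub_scale_sq)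
    qed
    show ?thesis unfolding ext_dist2_def D_def I_def[symmetric] a b
      by (simp add: sum.distrib sum_subtractf sum_distrib_left algebra_simps)
  qed
  have Phi_eq: "inner sy (z - zs) + (\<Sum>i\<in>I. inner (x i - xb) (w i - ws i))
      = (\<Sum>i\<in>I. inner (z - x i) (y i - w i) - inner (zs - x i) (y i - ws i))"
  proof -
    have t: "\<And>i. inner (z - x i) (y i - w i) - inner (zs - x i) (y i - ws i)
       = inner (y i) (z - zs) + inner (x i) (w i - ws i) - inner z (w i) + inner zs (ws i)"
      by (simp add: inner_diff_left inner_diff_right inner_commute algebra_simps)
    have sw': "(\<Sum>i\<in>I. w i) = 0" using sw unfolding I_def .
    have sws': "(\<Sum>i\<in>I. ws i) = 0" using sws unfolding I_def .
    have "(\<Sum>i\<in>I. inner (z - x i) (y i - w i) - inner (zs - x i) (y i - ws i))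
       = inner sy (z - zs) + (\<Sum>i\<in>I. inner (x i) (w i - ws i)) - inner z (\<Sum>i\<in>I. w i) + inner zs (\<Sum>i\<in>I. ws i)"
      unfolding t sy_def by (simp add: sum.distrib sum_subtractf inner_sum_left inner_sum_right)
    also have "\<dots> = inner sy (z - zs) + (\<Sum>i\<in>I. inner (x i) (w i - ws i))" using sw' sws' by simp
    also have "(\<Sum>i\<in>I. inner (x i) (w i - ws i)) = (\<Sum>i\<in>I. inner (x i - xb) (w i - ws i))"
    proof -
      have "(\<Sum>i\<in>I. inner (x i - xb) (w i - ws i)) = (\<Sum>i\<in>I. inner (x i) (w i - ws i)) - inner xb (\<Sum>i\<in>I. w i - ws i)"
        by (simp add: inner_diff_left inner_diff_right sum_subtractf inner_sum_right)
      also have "(\<Sum>i\<in>I. w i - ws i) = 0" using sw' sws' by (simp add: sum_subtractf)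
      finally show ?thesis by simp
    qed
    finally show ?thesis by simp
  qed
  have Phi_low: "inner sy (z - zs) + (\<Sum>i\<in>I. inner (x i - xb) (w i - ws i))
     \<ge> \<tau> * SY + \<rho> * (1 - L * \<rho>) * (norm \<Gamma>)\<^sup>2 + \<rho> * (1 - 2 * L * \<rho>) * inner ep \<Gamma>
        - L * \<rho>\<^sup>2 * (norm ep)\<^sup>2 + inner (z - zs) e"
  proof -
    have lown: "\<And>i. i \<in> {1..n} \<Longrightarrow> inner (z - x i) (y i - w i) - inner (zs - x i) (y i - ws i) \<ge> \<tau> * (norm (y i - w i))\<^sup>2"
    proof -
      fix i assume i: "i \<in> {1..n}"
      have "inner (z - x i) (y i - w i) = \<tau> * (norm (y i - w i))\<^sup>2"
        unfolding zx[OF i] by (simp add: power2_norm_eq_inner)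
      moreover have "- inner (zs - x i) (y i - ws i) = inner (y i - ws i) (x i - zs)"
        by (simp add: inner_diff_left inner_diff_right inner_commute)
      ultimately show "inner (z - x i) (y i - w i) - inner (zs - x i) (y i - ws i) \<ge> \<tau> * (norm (y i - w i))\<^sup>2"
        using mon[OF i] by linarith
    qed
    have s1: "(\<Sum>i=1..n. inner (z - x i) (y i - w i) - inner (zs - x i) (y i - ws i)) \<ge> \<tau> * SY"
      unfolding SY_def sum_distrib_left by (rule sum_mono) (use lown in auto)
    have tm: "inner (z - x (n+1)) (y (n+1) - w (n+1)) - inner (zs - x (n+1)) (y (n+1) - ws (n+1))
        = \<rho> * inner g \<Gamma> + \<rho> * inner g V2 + inner (z - zs) e + inner (x (n+1) - zs) (B (x (n+1)) - B zs)"
    proof -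
      have e1: "y (n+1) - w (n+1) = \<Gamma> + V2 + e" unfolding yn \<Gamma>_def V2_def by (simp add: algebra_simps)
      have e2: "y (n+1) - ws (n+1) = (B (x (n+1)) - B zs) + e" unfolding yn wsB by simp
      have t1: "inner (z - x (n+1)) (y (n+1) - w (n+1)) = \<rho> * inner g \<Gamma> + \<rho> * inner g V2 + inner (z - x (n+1)) e"
        unfolding e1 inner_add_right zxn by simp
      have t2: "inner (zs - x (n+1)) (y (n+1) - ws (n+1)) = inner (zs - x (n+1)) (B (x (n+1)) - B zs) + inner (zs - x (n+1)) e"
        unfolding e2 inner_add_right ..
      have t3: "inner (z - x (n+1)) e - inner (zs - x (n+1)) e = inner (z - zs) e" by (simp add: inner_diff_left)
      have t4: "- inner (zs - x (n+1)) (B (x (n+1)) - B zs) = inner (x (n+1) - zs) (B (x (n+1)) - B zs)"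
        by (metis inner_minus_left minus_diff_eq)
      show ?thesis using t1 t2 t3 t4 by linarith
    qed
    have Bm: "inner (x (n+1) - zs) (B (x (n+1)) - B zs) \<ge> 0" using Bmon by (simp add: inner_commute)
    have gV2: "inner g V2 \<ge> - L * \<rho> * (norm g)\<^sup>2"
    proof -
      have "norm V2 \<le> L * (\<rho> * norm g)" unfolding V2_def using Blip
        by (metis norm_minus_commute zxn norm_scaleR abs_of_nonneg rh)
      then have "norm g * norm V2 \<le> norm g * (L * (\<rho> * norm g))"
        by (rule mult_left_mono) simp
      then have "norm g * norm V2 \<le> L * \<rho> * (norm g)\<^sup>2"
        by (simp add: power2_eq_square algebra_simps)
      moreover have "- inner g V2 \<le> norm g * norm V2"
        using Cauchy_Schwarz_ineq2[of g V2] by linarith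
      ultimately show ?thesis by linarith
    qed
    have ng: "(norm g)\<^sup>2 = (norm \<Gamma>)\<^sup>2 + 2 * inner ep \<Gamma> + (norm ep)\<^sup>2"
      unfolding g_def by (simp add: power2_norm_eq_inner inner_add_left inner_add_right inner_commute)
    have gG: "inner g \<Gamma> = (norm \<Gamma>)\<^sup>2 + inner ep \<Gamma>"
      unfolding g_def by (simp add: power2_norm_eq_inner inner_add_left)
    have "\<rho> * inner g V2 \<ge> \<rho> * (- L * \<rho> * (norm g)\<^sup>2)" using gV2 rh by (rule mult_left_mono)
    then have lm: "inner (z - x (n+1)) (y (n+1) - w (n+1)) - inner (zs - x (n+1)) (y (n+1) - ws (n+1))
       \<ge> \<rho> * (1 - L * \<rho>) * (norm \<Gamma>)\<^sup>2 + \<rho> * (1 - 2 * L * \<rho>) * inner ep \<Gamma> - L * \<rho>\<^sup>2 * (norm ep)\<^sup>2 + inner (z - zs) e"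
    proof -
      have q1: "\<rho> * (- L * \<rho> * (norm g)\<^sup>2) = - (L * \<rho>\<^sup>2 * (norm \<Gamma>)\<^sup>2) - 2 * (L * \<rho>\<^sup>2 * inner ep \<Gamma>) - L * \<rho>\<^sup>2 * (norm ep)\<^sup>2"
        unfolding ng by (simp add: algebra_simps power2_eq_square)
      have q2: "\<rho> * inner g \<Gamma> = \<rho> * (norm \<Gamma>)\<^sup>2 + \<rho> * inner ep \<Gamma>" unfolding gG by (simp add: algebra_simps)
      have q3: "\<rho> * (1 - L * \<rho>) * (norm \<Gamma>)\<^sup>2 + \<rho> * (1 - 2 * L * \<rho>) * inner ep \<Gamma> - L * \<rho>\<^sup>2 * (norm ep)\<^sup>2
          = \<rho> * (norm \<Gamma>)\<^sup>2 - L * \<rho>\<^sup>2 * (norm \<Gamma>)\<^sup>2 + \<rho> * inner ep \<Gamma> - 2 * (L * \<rho>\<^sup>2 * inner ep \<Gamma>) - L * \<rho>\<^sup>2 * (norm ep)\<^sup>2"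
        by (simp add: algebra_simps power2_eq_square)
      show ?thesis unfolding tm using Bm q1 q2 q3 \<open>\<rho> * inner g V2 \<ge> _\<close> by linarith
    qed
    show ?thesis using Phi_eq splitI[of "\<lambda>i. inner (z - x i) (y i - w i) - inner (zs - x i) (y i - ws i)"] s1 lm by linarith
  qed
  have G_up: "(norm sy)\<^sup>2 + (\<Sum>i\<in>I. (norm (x i - xb))\<^sup>2)
     \<le> 2 * (norm V1)\<^sup>2 + 4 * L\<^sup>2 * \<rho>\<^sup>2 * (norm g)\<^sup>2 + 4 * (norm e)\<^sup>2 + \<tau>\<^sup>2 * SY + \<rho>\<^sup>2 * (norm g)\<^sup>2"
  proof -
    have sy_eq: "sy = V1 + V2 + e"
    proof -
      have "sy = (\<Sum>i\<in>I. y i - w i)" using sw unfolding sy_def I_def by (simp add: sum_subtractf)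
      also have "\<dots> = (\<Sum>i=1..n. y i - w i) + (y (n+1) - w (n+1))" by (rule splitI)
      finally show ?thesis unfolding V1_def V2_def \<Gamma>_def yn by (simp add: algebra_simps)
    qed
    have nV2: "(norm V2)\<^sup>2 \<le> L\<^sup>2 * \<rho>\<^sup>2 * (norm g)\<^sup>2"
    proof -
      have "norm V2 \<le> L * (\<rho> * norm g)" unfolding V2_def using Blip
        by (metis norm_minus_commute zxn norm_scaleR abs_of_nonneg rh)
      then have "(norm V2)\<^sup>2 \<le> (L * (\<rho> * norm g))\<^sup>2" by (rule power_mono) simp
      then show ?thesis by (simp add: power_mult_distrib)
    qed
    have h1: "(norm sy)\<^sup>2 \<le> 2 * (norm V1)\<^sup>2 + 2 * (norm (V2 + e))\<^sup>2"
      unfolding sy_eq using norm_add_sq_le[of V1 "V2 + e"] by (simp add: add.assoc)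
    have h2: "(norm (V2 + e))\<^sup>2 \<le> 2 * (norm V2)\<^sup>2 + 2 * (norm e)\<^sup>2" by (rule norm_add_sq_le)
    have s1: "(norm sy)\<^sup>2 \<le> 2 * (norm V1)\<^sup>2 + 4 * L\<^sup>2 * \<rho>\<^sup>2 * (norm g)\<^sup>2 + 4 * (norm e)\<^sup>2"
      using h1 h2 nV2 by linarith
    have "(\<Sum>i\<in>I. (norm (x i - xb))\<^sup>2) = (\<Sum>i\<in>I. (norm ((x i - z) - (1 / real (card I)) *\<^sub>R (\<Sum>j\<in>I. x j - z)))\<^sup>2)"
    proof (rule sum.cong[OF refl])
      fix i assume "i \<in> I"
      have "(1 / real (card I)) *\<^sub>R (\<Sum>j\<in>I. x j - z) = xb - z"
        unfolding xb_def cardI by (simp add: sum_subtractf scaleR_diff_right sum_constant_scaleR cardI)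
      then show "(norm (x i - xb))\<^sup>2 = (norm ((x i - z) - (1 / real (card I)) *\<^sub>R (\<Sum>j\<in>I. x j - z)))\<^sup>2"
        by (simp add: algebra_simps)
    qed
    also have "\<dots> \<le> (\<Sum>i\<in>I. (norm (x i - z))\<^sup>2)"
      by (rule sum_sq_dev_le[OF finI]) (simp add: cardI)
    also have "\<dots> = (\<Sum>i=1..n. (norm (x i - z))\<^sup>2) + (norm (x (n+1) - z))\<^sup>2" by (rule splitI)
    also have "(\<Sum>i=1..n. (norm (x i - z))\<^sup>2) = \<tau>\<^sup>2 * SY"
      unfolding SY_def sum_distrib_left
    proof (rule sum.cong[OF refl])
      fix i assume i: "i \<in> {1..n}"
      have "norm (x i - z) = norm (z - x i)" by (rule norm_minus_commute)
      then show "(norm (x i - z))\<^sup>2 = \<tau>\<^sup>2 * (norm (y i - w i))\<^sup>2"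
        unfolding zx[OF i] by (simp add: power_mult_distrib)
    qed
    also have "(norm (x (n+1) - z))\<^sup>2 = \<rho>\<^sup>2 * (norm g)\<^sup>2"
      using zxn by (metis norm_minus_commute norm_scaleR power_mult_distrib real_norm_def power2_abs)
    finally show ?thesis using s1 by linarith
  qed
  have ng: "(norm g)\<^sup>2 = (norm \<Gamma>)\<^sup>2 + 2 * inner ep \<Gamma> + (norm ep)\<^sup>2"
    unfolding g_def by (simp add: power2_norm_eq_inner inner_add_left inner_add_right inner_commute)
  have a2: "\<alpha>\<^sup>2 \<ge> 0" by simp
  have main: "ext_dist2 n (z - \<alpha> *\<^sub>R sy) (\<lambda>i. w i - \<alpha> *\<^sub>R (x i - xb)) zs ws
     \<le> D - 2 * \<alpha> * (\<tau> * SY + \<rho> * (1 - L * \<rho>) * (norm \<Gamma>)\<^sup>2 + \<rho> * (1 - 2 * L * \<rho>) * inner ep \<Gamma>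
        - L * \<rho>\<^sup>2 * (norm ep)\<^sup>2 + inner (z - zs) e)
       + \<alpha>\<^sup>2 * (2 * (norm V1)\<^sup>2 + 4 * L\<^sup>2 * \<rho>\<^sup>2 * (norm g)\<^sup>2 + 4 * (norm e)\<^sup>2 + \<tau>\<^sup>2 * SY + \<rho>\<^sup>2 * (norm g)\<^sup>2)"
    unfolding Qeq using mult_left_mono[OF Phi_low, of "2 * \<alpha>"] mult_left_mono[OF G_up a2] al by linarith
  have sy_def': "(\<Sum>i=1..n+1. y i) = sy" unfolding sy_def I_def ..
  have xb_def': "(1 / real (n+1)) *\<^sub>R (\<Sum>j=1..n+1. x j) = xb" unfolding xb_def I_def ..
  show ?thesis
  proof -
    have i1: "\<And>c. inner ep (c *\<^sub>R \<Gamma>) = c * inner ep \<Gamma>" by simp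
    have i2: "inner e ((- 2 * \<alpha>) *\<^sub>R (z - zs)) = - 2 * \<alpha> * inner (z - zs) e" by (simp add: inner_commute)
    have eqR: "D - 2 * \<alpha> * (\<tau> * SY + \<rho> * (1 - L * \<rho>) * (norm \<Gamma>)\<^sup>2 + \<rho> * (1 - 2 * L * \<rho>) * inner ep \<Gamma>
        - L * \<rho>\<^sup>2 * (norm ep)\<^sup>2 + inner (z - zs) e)
       + \<alpha>\<^sup>2 * (2 * (norm V1)\<^sup>2 + 4 * L\<^sup>2 * \<rho>\<^sup>2 * (norm g)\<^sup>2 + 4 * (norm e)\<^sup>2 + \<tau>\<^sup>2 * SY + \<rho>\<^sup>2 * (norm g)\<^sup>2)
      = D - 2 * \<alpha> * \<tau> * SY
      - 2 * \<alpha> * \<rho> * (1 - L * \<rho>) * (norm \<Gamma>)\<^sup>2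
      + \<alpha>\<^sup>2 * (2 * (norm V1)\<^sup>2 + \<tau>\<^sup>2 * SY + (4 * L\<^sup>2 + 1) * \<rho>\<^sup>2 * (norm \<Gamma>)\<^sup>2)
      + (- 2 * \<alpha> * \<rho> * (1 - 2 * L * \<rho>) + 2 * \<alpha>\<^sup>2 * (4 * L\<^sup>2 + 1) * \<rho>\<^sup>2) * inner ep \<Gamma>
      + (2 * \<alpha> * L * \<rho>\<^sup>2 + \<alpha>\<^sup>2 * (4 * L\<^sup>2 + 1) * \<rho>\<^sup>2) * (norm ep)\<^sup>2
      + (- 2 * \<alpha>) * inner (z - zs) e + 4 * \<alpha>\<^sup>2 * (norm e)\<^sup>2"
      unfolding ng by (simp add: algebra_simps power2_eq_square)
    have fin: "ext_dist2 n (z - \<alpha> *\<^sub>R sy) (\<lambda>i. w i - \<alpha> *\<^sub>R (x i - xb)) zs ws \<le> D - 2 * \<alpha> * \<tau> * SY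
      - 2 * \<alpha> * \<rho> * (1 - L * \<rho>) * (norm \<Gamma>)\<^sup>2
      + \<alpha>\<^sup>2 * (2 * (norm V1)\<^sup>2 + \<tau>\<^sup>2 * SY + (4 * L\<^sup>2 + 1) * \<rho>\<^sup>2 * (norm \<Gamma>)\<^sup>2)
      + (- 2 * \<alpha> * \<rho> * (1 - 2 * L * \<rho>) + 2 * \<alpha>\<^sup>2 * (4 * L\<^sup>2 + 1) * \<rho>\<^sup>2) * inner ep \<Gamma>
      + (2 * \<alpha> * L * \<rho>\<^sup>2 + \<alpha>\<^sup>2 * (4 * L\<^sup>2 + 1) * \<rho>\<^sup>2) * (norm ep)\<^sup>2
      + (- 2 * \<alpha>) * inner (z - zs) e + 4 * \<alpha>\<^sup>2 * (norm e)\<^sup>2"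
      using main unfolding eqR .
    show ?thesis unfolding sy_def' xb_def' inner_scaleR_right using fin unfolding D_def SY_def V1_def \<Gamma>_def inner_commute[of "z - zs" e] by simp
  qed
qed


lemma nn_cond_exp_le_from_int:
  fixes f :: "'m \<Rightarrow> ennreal" and h :: "'m \<Rightarrow> real"
  assumes P: "prob_space M" and sub: "subalgebra M F"
    and [measurable]: "f \<in> borel_measurable M" "h \<in> borel_measurable F"
    and le: "\<And>A. A \<in> sets F \<Longrightarrow> (\<integral>\<^sup>+x. indicator A x * f x \<partial>M) \<le> (\<integral>\<^sup>+x. indicator A x * ennreal (h x) \<partial>M)"
  shows "AE x in M. nn_cond_exp M F f x \<le> ennreal (h x)"
proof -
  interpret prob_space M by (rule P)
  interpret fms: finite_measure_subalgebra M F
    by unfold_locales (rule sub)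
  define g where "g = nn_cond_exp M F f"
  have [measurable]: "g \<in> borel_measurable F" unfolding g_def by simp
  have hM[measurable]: "h \<in> borel_measurable M" by (rule measurable_from_subalg[OF sub]) simp
  have gM[measurable]: "g \<in> borel_measurable M" unfolding g_def by simp
  define E where "E = (\<lambda>j::nat. {x\<in>space M. ennreal (h x) < g x \<and> h x \<le> real j})"
  have EF: "\<And>j. E j \<in> sets F"
  proof -
    fix j
    have "space F = space M" using sub unfolding subalgebra_def by simp
    then have "E j = {x\<in>space F. ennreal (h x) < g x \<and> h x \<le> real j}" unfolding E_def by simp
    also have "\<dots> \<in> sets F" by measurable
    finally show "E j \<in> sets F" .
  qed
  have EM[measurable]: "\<And>j. E j \<in> sets M" using EF sub unfolding subalgebra_def by blast
  have null: "\<And>j. E j \<in> null_sets M"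
  proof (rule ccontr)
    fix j assume nn: "E j \<notin> null_sets M"
    have i1: "(\<integral>\<^sup>+x. indicator (E j) x * g x \<partial>M) = (\<integral>\<^sup>+x. indicator (E j) x * f x \<partial>M)"
      unfolding g_def by (rule fms.nn_cond_exp_intg) (use EF in simp_all)
    have "(\<integral>\<^sup>+x. indicator (E j) x * ennreal (h x) \<partial>M) \<le> (\<integral>\<^sup>+x. ennreal (real j) \<partial>M)"
      by (rule nn_integral_mono) (auto simp: E_def split: split_indicator)
    also have "\<dots> < \<infinity>" by (simp add: emeasure_space_1)
    finally have fin: "(\<integral>\<^sup>+x. indicator (E j) x * ennreal (h x) \<partial>M) \<noteq> \<infinity>" by simp
    have "(\<integral>\<^sup>+x. indicator (E j) x * ennreal (h x) \<partial>M) < (\<integral>\<^sup>+x. indicator (E j) x * g x \<partial>M)"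
    proof (rule nn_integral_less)
      show "AE x in M. indicator (E j) x * ennreal (h x) \<le> indicator (E j) x * g x"
        by (auto simp: E_def split: split_indicator)
      show "\<not> (AE x in M. indicator (E j) x * g x \<le> indicator (E j) x * ennreal (h x))"
      proof
        assume "AE x in M. indicator (E j) x * g x \<le> indicator (E j) x * ennreal (h x)"
        then have "AE x in M. x \<notin> E j"
          by eventually_elim (auto simp: E_def split: split_indicator)
        then have "E j \<in> null_sets M" using EM by (simp add: AE_iff_null_sets)
        then show False using nn by simp
      qed
    next
      show "(\<lambda>x. indicator (E j) x * ennreal (h x)) \<in> borel_measurable M" by measurable
      show "(\<lambda>x. indicator (E j) x * g x) \<in> borel_measurable M" by measurable
    qed (use fin in simp_all)
    also have "\<dots> \<le> (\<integral>\<^sup>+x. indicator (E j) x * ennreal (h x) \<partial>M)"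
      unfolding i1 by (rule le[OF EF])
    finally show False by simp
  qed
  have "AE x in M. \<forall>j. x \<notin> E j"
    by (subst AE_all_countable) (use null AE_not_in in blast)
  moreover have "AE x in M. x \<in> space M" by (rule AE_space)
  ultimately show ?thesis
  proof eventually_elim
    case (elim x)
    show ?case
    proof (rule ccontr)
      assume "\<not> nn_cond_exp M F f x \<le> ennreal (h x)"
      then have lt: "ennreal (h x) < g x" unfolding g_def by simp
      obtain j :: nat where "h x \<le> real j" using real_arch_simple by blast
      then have "x \<in> E j \<or> x \<notin> space M" using lt unfolding E_def by auto
      then show False using elim by blast
    qed
  qed
qed

lemma ennreal_ind_mult: "ennreal (indicator C x * f x) = indicator C x * ennreal (f x)"
  by (simp split: split_indicator)

lemma ennreal_integral_le_nn:
  fixes f :: "'m \<Rightarrow> real"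
  assumes "integrable M f"
  shows "ennreal (\<integral>x. f x \<partial>M) \<le> (\<integral>\<^sup>+x. ennreal (f x) \<partial>M)"
proof -
  have im: "integrable M (\<lambda>x. max 0 (f x))" using assms by auto
  have "(\<integral>x. f x \<partial>M) \<le> (\<integral>x. max 0 (f x) \<partial>M)"
    by (rule integral_mono[OF assms im]) simp
  then have "ennreal (\<integral>x. f x \<partial>M) \<le> ennreal (\<integral>x. max 0 (f x) \<partial>M)" by (rule ennreal_leI)
  also have "\<dots> = (\<integral>\<^sup>+x. ennreal (max 0 (f x)) \<partial>M)"
    by (rule nn_integral_eq_integral[OF im, symmetric]) simp
  also have "\<dots> = (\<integral>\<^sup>+x. ennreal (f x) \<partial>M)"
    by (intro nn_integral_cong) (simp add: max_def ennreal_neg)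
  finally show ?thesis .
qed

lemma zero_mean_inner:
  fixes X W :: "'m \<Rightarrow> 'a::euclidean_space"
  assumes PS: "prob_space M" and subF: "subalgebra M F"
    and iX: "integrable M X" and [measurable]: "X \<in> borel_measurable M" "W \<in> borel_measurable F"
    and Wb: "\<And>x. norm (W x) \<le> j"
    and ce: "AE \<omega> in M. \<forall>b\<in>Basis. real_cond_exp M F (\<lambda>\<omega>. inner (X \<omega>) b) \<omega> = 0"
  shows "integrable M (\<lambda>x. inner (X x) (W x))" "(\<integral>x. inner (X x) (W x) \<partial>M) = 0"
proof -
  interpret prob_space M by (rule PS)
  interpret fF: finite_measure_subalgebra M F by unfold_locales (rule subF)
  have [measurable]: "W \<in> borel_measurable M" by (rule measurable_from_subalg[OF subF]) simp
  have ib: "integrable M (\<lambda>x. inner (W x) b * inner (X x) b)" if "b \<in> Basis" for b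
  proof (rule Bochner_Integration.integrable_bound[where f="\<lambda>x. j * norm (X x)"])
    show "integrable M (\<lambda>x. j * norm (X x))" using iX by simp
    show "AE x in M. norm (inner (W x) b * inner (X x) b) \<le> norm (j * norm (X x))"
    proof (rule AE_I2)
      fix x
      have "\<bar>inner (W x) b\<bar> \<le> j" using Wb[of x] that
        by (metis Basis_le_norm order_trans)
      moreover have "\<bar>inner (X x) b\<bar> \<le> norm (X x)" using that by (rule Basis_le_norm)
      ultimately have "\<bar>inner (W x) b\<bar> * \<bar>inner (X x) b\<bar> \<le> j * norm (X x)"
        by (intro mult_mono) auto
      moreover have "0 \<le> j" using Wb[of x] norm_ge_zero order_trans by blast
      ultimately show "norm (inner (W x) b * inner (X x) b) \<le> norm (j * norm (X x))"
        by (simp add: abs_mult)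
    qed
  qed measurable
  have i0: "(\<integral>x. inner (W x) b * inner (X x) b \<partial>M) = 0" if b: "b \<in> Basis" for b
  proof -
    have "(\<integral>x. inner (W x) b * inner (X x) b \<partial>M) = (\<integral>x. inner (W x) b * real_cond_exp M F (\<lambda>\<omega>. inner (X \<omega>) b) x \<partial>M)"
      by (rule fF.real_cond_exp_intg(2)[symmetric]) (use ib[OF b] in simp_all)
    also have "\<dots> = (\<integral>x. 0 \<partial>M)"
      by (rule integral_cong_AE) (use ce b in auto)
    finally show ?thesis by simp
  qed
  have eq: "\<And>x. inner (X x) (W x) = (\<Sum>b\<in>Basis. inner (W x) b * inner (X x) b)"
    by (subst euclidean_inner) (simp add: mult.commute)
  show "integrable M (\<lambda>x. inner (X x) (W x))" unfolding eq using ib by auto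
  show "(\<integral>x. inner (X x) (W x) \<partial>M) = 0" unfolding eq
    using Bochner_Integration.integral_sum[where I=Basis and f="\<lambda>b x. inner (W x) b * inner (X x) b"] ib i0 by simp
qed

lemma core_bound:
  fixes M F FE :: "'m measure"
    and Q P Sb R1 Rb H :: "'m \<Rightarrow> real" and V U eps e :: "'m \<Rightarrow> 'a::euclidean_space"
    and cs ce R2 :: real
  assumes PS: "prob_space M" and subF: "subalgebra M F" and subFE: "subalgebra M FE"
    and FFE: "sets F \<subseteq> sets FE"
    and [measurable]: "Q \<in> borel_measurable M" "P \<in> borel_measurable F" "V \<in> borel_measurable F"
      "U \<in> borel_measurable F" "Sb \<in> borel_measurable F" "R1 \<in> borel_measurable F"
      "H \<in> borel_measurable F" "eps \<in> borel_measurable M" "e \<in> borel_measurable M"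
    and inte: "integrable M eps" "integrable M e"
    and ce0: "AE \<omega> in M. \<forall>b\<in>Basis. real_cond_exp M F (\<lambda>\<omega>. inner (eps \<omega>) b) \<omega> = 0"
    and ce1: "AE \<omega> in M. \<forall>b\<in>Basis. real_cond_exp M F (\<lambda>\<omega>. inner (e \<omega>) b) \<omega> = 0"
    and Sbnd: "AE \<omega> in M. nn_cond_exp M F (\<lambda>\<omega>. ennreal ((norm (eps \<omega>))\<^sup>2)) \<omega> \<le> ennreal (Sb \<omega>)"
    and Rbnd: "AE \<omega> in M. nn_cond_exp M FE (\<lambda>\<omega>. ennreal ((norm (e \<omega>))\<^sup>2)) \<omega> \<le> ennreal (Rb \<omega>)"
    and Rb_le: "\<And>\<omega>. Rb \<omega> \<le> R1 \<omega> + R2 * (norm (eps \<omega>))\<^sup>2"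
    and R2: "R2 \<ge> 0" and cs: "cs \<ge> 0" and ce: "ce \<ge> 0"
    and Sb0: "\<And>\<omega>. 0 \<le> Sb \<omega>" and R10: "\<And>\<omega>. 0 \<le> R1 \<omega>" and Q0: "\<And>\<omega>. 0 \<le> Q \<omega>"
    and Qle: "\<And>\<omega>. Q \<omega> \<le> P \<omega> + inner (eps \<omega>) (V \<omega>) + cs * (norm (eps \<omega>))\<^sup>2
                       + inner (e \<omega>) (U \<omega>) + ce * (norm (e \<omega>))\<^sup>2"
    and Hge: "\<And>\<omega>. P \<omega> + cs * Sb \<omega> + ce * (R1 \<omega> + R2 * Sb \<omega>) \<le> H \<omega>"
  shows "AE \<omega> in M. nn_cond_exp M F (\<lambda>\<omega>. ennreal (Q \<omega>)) \<omega> \<le> ennreal (H \<omega>)"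
proof (rule nn_cond_exp_le_from_int[OF PS subF])
  interpret prob_space M by (rule PS)
  interpret fF: finite_measure_subalgebra M F by unfold_locales (rule subF)
  interpret fFE: finite_measure_subalgebra M FE by unfold_locales (rule subFE)
  have [measurable]: "P \<in> borel_measurable M" "V \<in> borel_measurable M"
      "U \<in> borel_measurable M" "Sb \<in> borel_measurable M" "R1 \<in> borel_measurable M"
      "H \<in> borel_measurable M"
    by (rule measurable_from_subalg[OF subF], simp)+
  show "(\<lambda>\<omega>. ennreal (Q \<omega>)) \<in> borel_measurable M" by measurable
  show "H \<in> borel_measurable F" by simp
  define Hc where "Hc = (\<lambda>\<omega>. P \<omega> + cs * Sb \<omega> + ce * (R1 \<omega> + R2 * Sb \<omega>))"
  have [measurable]: "Hc \<in> borel_measurable M" unfolding Hc_def by measurable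
  have K: "(\<integral>\<^sup>+x. indicator C x * ennreal (Q x) \<partial>M) \<le> (\<integral>\<^sup>+x. indicator C x * ennreal (H x) \<partial>M)"
    if CF: "C \<in> sets F" and j0: "0 \<le> j" and bnd: "\<And>\<omega>. \<omega> \<in> C \<Longrightarrow> \<bar>P \<omega>\<bar> \<le> j \<and> norm (V \<omega>) \<le> j \<and> norm (U \<omega>) \<le> j \<and> Sb \<omega> \<le> j \<and> R1 \<omega> \<le> j"
    for C j
  proof -
    have CM[measurable]: "C \<in> sets M" using CF subF unfolding subalgebra_def by blast
    have CFE: "C \<in> sets FE" using CF FFE by blast
    define c where "c = (\<lambda>x. indicator C x :: real)"
    have [measurable]: "c \<in> borel_measurable F" unfolding c_def using CF by simp
    have [measurable]: "c \<in> borel_measurable M" unfolding c_def by simp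
    have c01: "\<And>x. c x = 0 \<or> c x = 1" unfolding c_def by (simp split: split_indicator)
    have c0: "\<And>x. c x \<ge> 0" unfolding c_def by simp
    have intb: "integrable M (\<lambda>x. c x * f x)" if [measurable]: "f \<in> borel_measurable M" and fb: "\<And>x. x \<in> C \<Longrightarrow> \<bar>f x\<bar> \<le> j" for f
    proof (rule Bochner_Integration.integrable_bound[where f="\<lambda>_. j"])
      show "integrable M (\<lambda>_. j)" by simp
      show "AE x in M. norm (c x * f x) \<le> norm j"
        using fb by (auto simp: c_def split: split_indicator intro!: AE_I2) (smt (verit) fb)
    qed measurable
    have iP: "integrable M (\<lambda>x. c x * P x)" by (rule intb) (use bnd in auto)
    have iSb: "integrable M (\<lambda>x. c x * Sb x)" by (rule intb) (use bnd Sb0 in auto)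
    have iR1: "integrable M (\<lambda>x. c x * R1 x)" by (rule intb) (use bnd R10 in auto)
    have nS: "(\<integral>\<^sup>+x. ennreal (c x * (norm (eps x))\<^sup>2) \<partial>M) \<le> (\<integral>\<^sup>+x. ennreal (c x * Sb x) \<partial>M)"
    proof -
      have "(\<integral>\<^sup>+x. ennreal (c x * (norm (eps x))\<^sup>2) \<partial>M) = (\<integral>\<^sup>+x. indicator C x * ennreal ((norm (eps x))\<^sup>2) \<partial>M)"
        unfolding c_def by (intro nn_integral_cong) (simp split: split_indicator)
      also have "\<dots> = (\<integral>\<^sup>+x. indicator C x * nn_cond_exp M F (\<lambda>\<omega>. ennreal ((norm (eps \<omega>))\<^sup>2)) x \<partial>M)"
        by (rule fF.nn_cond_exp_intg[symmetric]) (use CF in simp_all)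
      also have "\<dots> \<le> (\<integral>\<^sup>+x. indicator C x * ennreal (Sb x) \<partial>M)"
        by (rule nn_integral_mono_AE) (use Sbnd in \<open>auto simp: mult_left_mono\<close>)
      also have "\<dots> = (\<integral>\<^sup>+x. ennreal (c x * Sb x) \<partial>M)" unfolding c_def by (intro nn_integral_cong) (simp split: split_indicator)
      finally show ?thesis .
    qed
    have nR: "(\<integral>\<^sup>+x. ennreal (c x * (norm (e x))\<^sup>2) \<partial>M) \<le> (\<integral>\<^sup>+x. ennreal (c x * R1 x) \<partial>M) + R2 * (\<integral>\<^sup>+x. ennreal (c x * Sb x) \<partial>M)"
    proof -
      have "(\<integral>\<^sup>+x. ennreal (c x * (norm (e x))\<^sup>2) \<partial>M) = (\<integral>\<^sup>+x. indicator C x * ennreal ((norm (e x))\<^sup>2) \<partial>M)"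
        unfolding c_def by (intro nn_integral_cong) (simp split: split_indicator)
      also have "\<dots> = (\<integral>\<^sup>+x. indicator C x * nn_cond_exp M FE (\<lambda>\<omega>. ennreal ((norm (e \<omega>))\<^sup>2)) x \<partial>M)"
        by (rule fFE.nn_cond_exp_intg[symmetric]) (use CFE in simp_all)
      also have "\<dots> \<le> (\<integral>\<^sup>+x. indicator C x * ennreal (Rb x) \<partial>M)"
        by (rule nn_integral_mono_AE) (use Rbnd in \<open>auto simp: mult_left_mono\<close>)
      also have "\<dots> \<le> (\<integral>\<^sup>+x. ennreal (c x * R1 x) + R2 * ennreal (c x * (norm (eps x))\<^sup>2) \<partial>M)"
      proof (rule nn_integral_mono)
        fix x
        have "ennreal (Rb x) \<le> ennreal (R1 x + R2 * (norm (eps x))\<^sup>2)" using Rb_le ennreal_leI by blast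
        also have "\<dots> = ennreal (R1 x) + R2 * ennreal ((norm (eps x))\<^sup>2)"
          using R10 R2 by (simp add: ennreal_plus ennreal_mult)
        finally show "indicator C x * ennreal (Rb x) \<le> ennreal (c x * R1 x) + R2 * ennreal (c x * (norm (eps x))\<^sup>2)"
          unfolding c_def ennreal_ind_mult by (auto split: split_indicator)
      qed
      also have "\<dots> = (\<integral>\<^sup>+x. ennreal (c x * R1 x) \<partial>M) + R2 * (\<integral>\<^sup>+x. ennreal (c x * (norm (eps x))\<^sup>2) \<partial>M)"
        by (simp add: nn_integral_add nn_integral_cmult)
      also have "\<dots> \<le> (\<integral>\<^sup>+x. ennreal (c x * R1 x) \<partial>M) + R2 * (\<integral>\<^sup>+x. ennreal (c x * Sb x) \<partial>M)"
        using nS by (intro add_left_mono mult_left_mono) auto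
      finally show ?thesis .
    qed
    have eSb: "(\<integral>\<^sup>+x. ennreal (c x * Sb x) \<partial>M) = ennreal (\<integral>x. c x * Sb x \<partial>M)"
      by (rule nn_integral_eq_integral[OF iSb]) (auto intro!: AE_I2 mult_nonneg_nonneg c0 Sb0)
    have eR1: "(\<integral>\<^sup>+x. ennreal (c x * R1 x) \<partial>M) = ennreal (\<integral>x. c x * R1 x \<partial>M)"
      by (rule nn_integral_eq_integral[OF iR1]) (auto intro!: AE_I2 mult_nonneg_nonneg c0 R10)
    have iS: "integrable M (\<lambda>x. c x * (norm (eps x))\<^sup>2)"
    proof (rule integrableI_bounded)
      show "(\<integral>\<^sup>+x. ennreal (norm (c x * (norm (eps x))\<^sup>2)) \<partial>M) < \<infinity>"
        using nS c0 unfolding eSb by (simp add: abs_mult) (metis ennreal_less_top order_le_less_trans)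
    qed measurable
    have iR: "integrable M (\<lambda>x. c x * (norm (e x))\<^sup>2)"
    proof (rule integrableI_bounded)
      have "(\<integral>\<^sup>+x. ennreal (norm (c x * (norm (e x))\<^sup>2)) \<partial>M) = (\<integral>\<^sup>+x. ennreal (c x * (norm (e x))\<^sup>2) \<partial>M)"
        by (intro nn_integral_cong) (simp add: abs_mult c0)
      also have "\<dots> \<le> ennreal (\<integral>x. c x * R1 x \<partial>M) + R2 * ennreal (\<integral>x. c x * Sb x \<partial>M)"
        using nR unfolding eSb eR1 .
      also have "\<dots> < \<infinity>" by (simp add: ennreal_mult_less_top)
      finally show "(\<integral>\<^sup>+x. ennreal (norm (c x * (norm (e x))\<^sup>2)) \<partial>M) < \<infinity>" .
    qed measurable
    have eS: "(\<integral>\<^sup>+x. ennreal (c x * (norm (eps x))\<^sup>2) \<partial>M) = ennreal (\<integral>x. c x * (norm (eps x))\<^sup>2 \<partial>M)"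
      by (rule nn_integral_eq_integral[OF iS]) (auto intro!: AE_I2 mult_nonneg_nonneg c0)
    have eR: "(\<integral>\<^sup>+x. ennreal (c x * (norm (e x))\<^sup>2) \<partial>M) = ennreal (\<integral>x. c x * (norm (e x))\<^sup>2 \<partial>M)"
      by (rule nn_integral_eq_integral[OF iR]) (auto intro!: AE_I2 mult_nonneg_nonneg c0)
    have pSb: "0 \<le> (\<integral>x. c x * Sb x \<partial>M)" by (rule integral_nonneg_AE) (auto intro!: AE_I2 mult_nonneg_nonneg c0 Sb0)
    have pR1: "0 \<le> (\<integral>x. c x * R1 x \<partial>M)" by (rule integral_nonneg_AE) (auto intro!: AE_I2 mult_nonneg_nonneg c0 R10)
    have rS: "(\<integral>x. c x * (norm (eps x))\<^sup>2 \<partial>M) \<le> (\<integral>x. c x * Sb x \<partial>M)"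
      using nS unfolding eS eSb using pSb by (simp add: ennreal_le_iff)
    have rR: "(\<integral>x. c x * (norm (e x))\<^sup>2 \<partial>M) \<le> (\<integral>x. c x * R1 x \<partial>M) + R2 * (\<integral>x. c x * Sb x \<partial>M)"
    proof -
      have eqq: "ennreal (\<integral>x. c x * R1 x \<partial>M) + ennreal R2 * ennreal (\<integral>x. c x * Sb x \<partial>M)
          = ennreal ((\<integral>x. c x * R1 x \<partial>M) + R2 * (\<integral>x. c x * Sb x \<partial>M))"
        using pSb pR1 R2 by (simp add: ennreal_plus ennreal_mult)
      have "ennreal (\<integral>x. c x * (norm (e x))\<^sup>2 \<partial>M) \<le> ennreal ((\<integral>x. c x * R1 x \<partial>M) + R2 * (\<integral>x. c x * Sb x \<partial>M))"
        using nR unfolding eR eSb eR1 eqq[symmetric] .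
      then show ?thesis by (subst (asm) ennreal_le_iff) (use pSb pR1 R2 in auto)
    qed
    have zV: "integrable M (\<lambda>x. inner (eps x) (c x *\<^sub>R V x))" "(\<integral>x. inner (eps x) (c x *\<^sub>R V x) \<partial>M) = 0"
    proof -
      have b: "\<And>x. norm (c x *\<^sub>R V x) \<le> j"
      proof -
        fix x show "norm (c x *\<^sub>R V x) \<le> j"
          using bnd[of x] j0
          by (cases "x \<in> C") (auto simp: c_def)
      qed
      show "integrable M (\<lambda>x. inner (eps x) (c x *\<^sub>R V x))" "(\<integral>x. inner (eps x) (c x *\<^sub>R V x) \<partial>M) = 0"
        using zero_mean_inner[OF PS subF inte(1) _ _ b ce0] by simp_all
    qed
    have zU: "integrable M (\<lambda>x. inner (e x) (c x *\<^sub>R U x))" "(\<integral>x. inner (e x) (c x *\<^sub>R U x) \<partial>M) = 0"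
    proof -
      have b: "\<And>x. norm (c x *\<^sub>R U x) \<le> j"
      proof -
        fix x show "norm (c x *\<^sub>R U x) \<le> j"
          using bnd[of x] j0
          by (cases "x \<in> C") (auto simp: c_def)
      qed
      show "integrable M (\<lambda>x. inner (e x) (c x *\<^sub>R U x))" "(\<integral>x. inner (e x) (c x *\<^sub>R U x) \<partial>M) = 0"
        using zero_mean_inner[OF PS subF inte(2) _ _ b ce1] by simp_all
    qed
    define Z where "Z = (\<lambda>x. c x * P x + inner (eps x) (c x *\<^sub>R V x) + cs * (c x * (norm (eps x))\<^sup>2)
                       + inner (e x) (c x *\<^sub>R U x) + ce * (c x * (norm (e x))\<^sup>2))"
    have iZ: "integrable M Z" unfolding Z_def using iP zV(1) iS zU(1) iR by auto
    have cQZ: "\<And>x. c x * Q x \<le> Z x"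
    proof -
      fix x
      show "c x * Q x \<le> Z x"
        using c01[of x] Qle[of x] by (auto simp: Z_def)
    qed
    have iQ: "integrable M (\<lambda>x. c x * Q x)"
    proof (rule Bochner_Integration.integrable_bound[OF iZ])
      show "AE x in M. norm (c x * Q x) \<le> norm (Z x)"
        using cQZ c0 Q0 by (auto intro!: AE_I2) (smt (verit) mult_nonneg_nonneg cQZ c0 Q0)
    qed measurable
    have iHc: "integrable M (\<lambda>x. c x * Hc x)"
      unfolding Hc_def using iP iSb iR1 by (simp add: algebra_simps)
    have "(\<integral>x. c x * Q x \<partial>M) \<le> (\<integral>x. Z x \<partial>M)"
      by (rule integral_mono[OF iQ iZ cQZ])
    also have "(\<integral>x. Z x \<partial>M) = (\<integral>x. c x * P x \<partial>M) + cs * (\<integral>x. c x * (norm (eps x))\<^sup>2 \<partial>M)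
                       + ce * (\<integral>x. c x * (norm (e x))\<^sup>2 \<partial>M)"
      unfolding Z_def using iP zV iS zU iR by simp
    also have "\<dots> \<le> (\<integral>x. c x * P x \<partial>M) + cs * (\<integral>x. c x * Sb x \<partial>M)
                       + ce * ((\<integral>x. c x * R1 x \<partial>M) + R2 * (\<integral>x. c x * Sb x \<partial>M))"
      using rS rR cs ce by (intro add_mono mult_left_mono) auto
    also have "\<dots> = (\<integral>x. c x * Hc x \<partial>M)"
      unfolding Hc_def using iP iSb iR1 by (simp add: algebra_simps)
    finally have le1: "(\<integral>x. c x * Q x \<partial>M) \<le> (\<integral>x. c x * Hc x \<partial>M)" .
    have "(\<integral>\<^sup>+x. indicator C x * ennreal (Q x) \<partial>M) = (\<integral>\<^sup>+x. ennreal (c x * Q x) \<partial>M)"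
      unfolding c_def by (intro nn_integral_cong) (simp split: split_indicator)
    also have "\<dots> = ennreal (\<integral>x. c x * Q x \<partial>M)"
      by (rule nn_integral_eq_integral[OF iQ]) (auto intro!: AE_I2 mult_nonneg_nonneg c0 Q0)
    also have "\<dots> \<le> ennreal (\<integral>x. c x * Hc x \<partial>M)" using le1 by (rule ennreal_leI)
    also have "\<dots> \<le> (\<integral>\<^sup>+x. ennreal (c x * Hc x) \<partial>M)" by (rule ennreal_integral_le_nn[OF iHc])
    also have "\<dots> \<le> (\<integral>\<^sup>+x. indicator C x * ennreal (H x) \<partial>M)"
      by (rule nn_integral_mono) (use Hge in \<open>auto simp: c_def Hc_def split: split_indicator intro: ennreal_leI\<close>)
    finally show ?thesis .
  qed
  show "(\<integral>\<^sup>+x. indicator A x * ennreal (Q x) \<partial>M) \<le> (\<integral>\<^sup>+x. indicator A x * ennreal (H x) \<partial>M)"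
    if AF: "A \<in> sets F" for A
  proof -
    have spF: "space F = space M" using subF unfolding subalgebra_def by simp
    have AM: "A \<subseteq> space M" using sets.sets_into_space[OF AF] spF by simp
    define Bj where "Bj = (\<lambda>j::nat. {x\<in>space M. \<bar>P x\<bar> \<le> real j \<and> norm (V x) \<le> real j \<and> norm (U x) \<le> real j \<and> Sb x \<le> real j \<and> R1 x \<le> real j})"
    have BjF: "Bj j \<in> sets F" for j
    proof -
      have "Bj j = {x\<in>space F. \<bar>P x\<bar> \<le> real j \<and> norm (V x) \<le> real j \<and> norm (U x) \<le> real j \<and> Sb x \<le> real j \<and> R1 x \<le> real j}"
        unfolding Bj_def spF ..
      also have "\<dots> \<in> sets F" by measurable
      finally show ?thesis .
    qed
    have BjM[measurable]: "Bj j \<in> sets M" for j using BjF[of j] subF unfolding subalgebra_def by blast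
    have AFM[measurable]: "A \<in> sets M" using AF subF unfolding subalgebra_def by blast
    define f where "f = (\<lambda>j x. indicator (A \<inter> Bj j) x * ennreal (Q x))"
    have incf: "incseq f"
    proof (rule incseq_SucI, rule le_funI)
      fix j x
      have "Bj j \<subseteq> Bj (Suc j)" unfolding Bj_def by auto
      then show "f j x \<le> f (Suc j) x" unfolding f_def by (auto split: split_indicator)
    qed
    have fm[measurable]: "\<And>j. f j \<in> borel_measurable M" unfolding f_def by measurable
    have sup: "(SUP j. f j x) = indicator A x * ennreal (Q x)" for x
    proof (cases "x \<in> A")
      case False then show ?thesis unfolding f_def by simp
    next
      case True
      then have xs: "x \<in> space M" using AM by auto
      obtain j0 :: nat where "max (max \<bar>P x\<bar> (norm (V x))) (max (norm (U x)) (max (Sb x) (R1 x))) \<le> real j0"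
        using real_arch_simple by blast
      then have "x \<in> Bj j0" unfolding Bj_def using xs by auto
      then have fj0: "f j0 x = ennreal (Q x)" unfolding f_def using True by simp
      have "(SUP j. f j x) = ennreal (Q x)"
      proof (rule antisym)
        show "(SUP j. f j x) \<le> ennreal (Q x)"
          by (rule SUP_least) (auto simp: f_def split: split_indicator)
        show "ennreal (Q x) \<le> (SUP j. f j x)" unfolding fj0[symmetric] by (rule SUP_upper) simp
      qed
      then show ?thesis using True by simp
    qed
    have "(\<integral>\<^sup>+x. indicator A x * ennreal (Q x) \<partial>M) = (\<integral>\<^sup>+x. (SUP j. f j x) \<partial>M)"
      unfolding sup ..
    also have "\<dots> = (SUP j. integral\<^sup>N M (f j))"
      by (rule nn_integral_monotone_convergence_SUP[OF incf fm])
    also have "\<dots> \<le> (\<integral>\<^sup>+x. indicator A x * ennreal (H x) \<partial>M)"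
    proof (rule SUP_least)
      fix j
      have "integral\<^sup>N M (f j) \<le> (\<integral>\<^sup>+x. indicator (A \<inter> Bj j) x * ennreal (H x) \<partial>M)"
        unfolding f_def
      proof (rule K)
        show "A \<inter> Bj j \<in> sets F" using AF BjF by auto
        show "0 \<le> real j" by simp
        fix \<omega> assume "\<omega> \<in> A \<inter> Bj j"
        then show "\<bar>P \<omega>\<bar> \<le> real j \<and> norm (V \<omega>) \<le> real j \<and> norm (U \<omega>) \<le> real j \<and> Sb \<omega> \<le> real j \<and> R1 \<omega> \<le> real j"
          unfolding Bj_def by auto
      qed
      also have "\<dots> \<le> (\<integral>\<^sup>+x. indicator A x * ennreal (H x) \<partial>M)"
        by (rule nn_integral_mono) (auto split: split_indicator)
      finally show "integral\<^sup>N M (f j) \<le> (\<integral>\<^sup>+x. indicator A x * ennreal (H x) \<partial>M)" .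
    qed
    finally show ?thesis .
  qed
qed


lemma gen_sigma_gen_Pow: "{X -` S \<inter> space M | X S. X \<in> Xs \<and> S \<in> sets borel} \<subseteq> Pow (space M)"
  by auto

lemma gen_sigma_space: "space (gen_sigma M Xs) = space M"
  unfolding gen_sigma_def by (rule space_measure_of[OF gen_sigma_gen_Pow])

lemma gen_sigma_sets: "sets (gen_sigma M Xs) = sigma_sets (space M) {X -` S \<inter> space M | X S. X \<in> Xs \<and> S \<in> sets borel}"
  unfolding gen_sigma_def by (rule sets_measure_of[OF gen_sigma_gen_Pow])

lemma gen_sigma_sub:
  assumes "\<And>X. X \<in> Xs \<Longrightarrow> X \<in> borel_measurable M"
  shows "subalgebra M (gen_sigma M Xs)"
  unfolding subalgebra_def
proof
  show "space (gen_sigma M Xs) = space M" by (rule gen_sigma_space)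
  have "{X -` S \<inter> space M | X S. X \<in> Xs \<and> S \<in> sets borel} \<subseteq> sets M"
    using assms by (auto simp: measurable_sets)
  then show "sets (gen_sigma M Xs) \<subseteq> sets M"
    unfolding gen_sigma_sets by (rule sets.sigma_sets_subset)
qed

lemma gen_sigma_meas:
  assumes "X \<in> Xs"
  shows "X \<in> borel_measurable (gen_sigma M Xs)"
proof (rule measurableI)
  fix x assume "x \<in> space (gen_sigma M Xs)" then show "X x \<in> space borel" by simp
next
  fix S :: "'b set" assume "S \<in> sets borel"
  then have "X -` S \<inter> space M \<in> {X -` S \<inter> space M | X S. X \<in> Xs \<and> S \<in> sets borel}" using assms by blast
  then show "X -` S \<inter> space (gen_sigma M Xs) \<in> sets (gen_sigma M Xs)"
    unfolding gen_sigma_sets gen_sigma_space by (rule sigma_sets.Basic)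
qed

lemma gen_sigma_mono:
  assumes "Xs \<subseteq> Ys"
  shows "sets (gen_sigma M Xs) \<subseteq> sets (gen_sigma M Ys)"
  unfolding gen_sigma_sets by (rule sigma_sets_mono') (use assms in blast)


lemma ext_dist2_cong:
  assumes "\<And>i. i \<in> {1..n+1} \<Longrightarrow> w i = w' i"
  shows "ext_dist2 n z w zs ws = ext_dist2 n z w' zs ws"
  unfolding ext_dist2_def using assms by (intro arg_cong2[where f="(+)"] sum.cong) auto

lemma ext_dist2_split:
  "ext_dist2 n z w zs ws = (norm (z - zs))\<^sup>2 + (\<Sum>i=1..n. (norm (w i - ws i))\<^sup>2) + (norm (w (n+1) - ws (n+1)))\<^sup>2"
  unfolding ext_dist2_def by (simp add: sum.cl_ivl_Suc add.assoc)

lemma resolvent_facts: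
  fixes A :: "'a::euclidean_space \<Rightarrow> 'a set"
  assumes mm: "maximal_monotone A" and tau: "\<tau> > 0" and wsA: "ws \<in> A zs"
    and xdef: "x = resolvent \<tau> A (z + \<tau> *\<^sub>R w)" and ydef: "y = (1 / \<tau>) *\<^sub>R ((z + \<tau> *\<^sub>R w) - x)"
  shows "y \<in> A x" "z + \<tau> *\<^sub>R w = x + \<tau> *\<^sub>R y" "norm (y - w) \<le> norm (z - zs) / \<tau> + 2 * norm (w - ws)"
proof -
  obtain u where u: "u \<in> A x" "z + \<tau> *\<^sub>R w = x + \<tau> *\<^sub>R u"
    using resolvent_spec[OF mm tau, of "z + \<tau> *\<^sub>R w"] unfolding xdef[symmetric] by blast
  have yu: "y = u" unfolding ydef using u(2) tau by simp
  show "y \<in> A x" using u yu by simp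
  show "z + \<tau> *\<^sub>R w = x + \<tau> *\<^sub>R y" using u yu by simp
  have rzs: "resolvent \<tau> A (zs + \<tau> *\<^sub>R ws) = zs" by (rule resolvent_eq[OF mm tau wsA])
  have ne: "norm (((z + \<tau> *\<^sub>R w) - x) - ((zs + \<tau> *\<^sub>R ws) - zs)) \<le> norm ((z + \<tau> *\<^sub>R w) - (zs + \<tau> *\<^sub>R ws))"
    using resolvent_nonexp(2)[OF mm tau, of "z + \<tau> *\<^sub>R w" "zs + \<tau> *\<^sub>R ws"] unfolding xdef[symmetric] rzs .
  have e1: "((z + \<tau> *\<^sub>R w) - x) - ((zs + \<tau> *\<^sub>R ws) - zs) = \<tau> *\<^sub>R (y - ws)"
    using u(2) yu by (simp add: algebra_simps)
  have e2: "(z + \<tau> *\<^sub>R w) - (zs + \<tau> *\<^sub>R ws) = (z - zs) + \<tau> *\<^sub>R (w - ws)" by (simp add: algebra_simps)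
  have "\<tau> * norm (y - ws) \<le> norm (z - zs) + \<tau> * norm (w - ws)"
    using ne unfolding e1 e2 using norm_triangle_ineq[of "z - zs" "\<tau> *\<^sub>R (w - ws)"] tau by simp
  then have "norm (y - ws) \<le> norm (z - zs) / \<tau> + norm (w - ws)"
    using tau by (simp add: field_simps)
  moreover have "norm (y - w) \<le> norm (y - ws) + norm (w - ws)"
    using norm_triangle_ineq4[of "y - ws" "w - ws"] by simp
  ultimately show "norm (y - w) \<le> norm (z - zs) / \<tau> + 2 * norm (w - ws)" by linarith
qed

lemma norm_sum_sq_le:
  fixes v :: "nat \<Rightarrow> 'a::real_normed_vector"
  shows "(norm (\<Sum>i\<in>I. v i))\<^sup>2 \<le> real (card I) * (\<Sum>i\<in>I. (norm (v i))\<^sup>2)"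
proof -
  have "norm (\<Sum>i\<in>I. v i) \<le> (\<Sum>i\<in>I. norm (v i))" by (rule norm_sum)
  then have "(norm (\<Sum>i\<in>I. v i))\<^sup>2 \<le> (\<Sum>i\<in>I. norm (v i))\<^sup>2" by (simp add: power_mono)
  also have "\<dots> \<le> (\<Sum>i\<in>I. (norm (v i))\<^sup>2) * card I" by (rule sum_squared_le_sum_of_squares)
  finally show ?thesis by (simp add: mult.commute)
qed

lemma V1_bound:
  fixes u :: "nat \<Rightarrow> 'a::real_normed_vector"
  shows "(norm ((\<Sum>i=1..n. u i) + g))\<^sup>2 \<le> real (n+1) * ((\<Sum>i=1..n. (norm (u i))\<^sup>2) + (norm g)\<^sup>2)"
proof -
  define v where "v = (\<lambda>i. if i = n+1 then g else u i)"
  have e1: "(\<Sum>i=1..n. u i) + g = (\<Sum>i\<in>{1..n+1}. v i)"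
    unfolding v_def by (simp add: sum.cl_ivl_Suc)
  have e2: "(\<Sum>i=1..n. (norm (u i))\<^sup>2) + (norm g)\<^sup>2 = (\<Sum>i\<in>{1..n+1}. (norm (v i))\<^sup>2)"
    unfolding v_def by (simp add: sum.cl_ivl_Suc)
  show ?thesis unfolding e1 e2 using norm_sum_sq_le[of v "{1..n+1}"] by simp
qed

lemma sq_diff_le: fixes p q :: "'a::real_inner" shows "(norm (p - q))\<^sup>2 \<le> 2 * (norm p)\<^sup>2 + 2 * (norm q)\<^sup>2"
  using norm_add_sq_le[of p "- q"] by simp

lemma lip_le:
  assumes "L-lipschitz_on UNIV B"
  shows "norm (B a - B b) \<le> L * norm (a - b)"
  using lipschitz_onD[OF assms, of a b] by (simp add: dist_norm)

lemma G2_bound: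
  fixes B :: "'a::real_inner \<Rightarrow> 'a"
  assumes lip: "L-lipschitz_on UNIV B" and L: "L \<ge> 0"
  shows "(norm (B z - wm))\<^sup>2 \<le> 2 * L\<^sup>2 * (norm (z - zs))\<^sup>2 + 2 * (norm (wm - B zs))\<^sup>2"
proof -
  have "B z - wm = (B z - B zs) - (wm - B zs)" by simp
  then have "(norm (B z - wm))\<^sup>2 \<le> 2 * (norm (B z - B zs))\<^sup>2 + 2 * (norm (wm - B zs))\<^sup>2"
    using sq_diff_le[of "B z - B zs" "wm - B zs"] by simp
  moreover have "(norm (B z - B zs))\<^sup>2 \<le> L\<^sup>2 * (norm (z - zs))\<^sup>2"
    using power_mono[OF lip_le[OF lip, of z zs] norm_ge_zero] by (simp add: power_mult_distrib)
  ultimately show ?thesis by linarith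
qed

lemma Bz_bound:
  fixes B :: "'a::real_inner \<Rightarrow> 'a"
  assumes lip: "L-lipschitz_on UNIV B"
  shows "(norm (B z))\<^sup>2 \<le> 2 * L\<^sup>2 * (norm (z - zs))\<^sup>2 + 2 * (norm (B zs))\<^sup>2"
proof -
  have "(norm (B z))\<^sup>2 \<le> 2 * (norm (B z - B zs))\<^sup>2 + 2 * (norm (B zs))\<^sup>2"
    using norm_add_sq_le[of "B z - B zs" "B zs"] by simp
  moreover have "(norm (B z - B zs))\<^sup>2 \<le> L\<^sup>2 * (norm (z - zs))\<^sup>2"
    using power_mono[OF lip_le[OF lip, of z zs] norm_ge_zero] by (simp add: power_mult_distrib)
  ultimately show ?thesis by linarith
qed

lemma Bxm_bound:
  fixes B :: "'a::real_inner \<Rightarrow> 'a"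
  assumes lip: "L-lipschitz_on UNIV B" and xm: "xm = z - \<rho> *\<^sub>R ((B z + ep) - wm)"
  shows "(norm (B xm))\<^sup>2 \<le> 8 * L\<^sup>2 * (norm (z - zs))\<^sup>2 + 8 * L\<^sup>2 * \<rho>\<^sup>2 * (norm (B z - wm))\<^sup>2
            + 4 * L\<^sup>2 * \<rho>\<^sup>2 * (norm ep)\<^sup>2 + 2 * (norm (B zs))\<^sup>2"
proof -
  have b1: "(norm (B xm))\<^sup>2 \<le> 2 * L\<^sup>2 * (norm (xm - zs))\<^sup>2 + 2 * (norm (B zs))\<^sup>2" by (rule Bz_bound[OF lip])
  have e: "xm - zs = ((z - zs) - \<rho> *\<^sub>R (B z - wm)) - \<rho> *\<^sub>R ep" unfolding xm by (simp add: algebra_simps)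
  have b2: "(norm (xm - zs))\<^sup>2 \<le> 2 * (norm ((z - zs) - \<rho> *\<^sub>R (B z - wm)))\<^sup>2 + 2 * (norm (\<rho> *\<^sub>R ep))\<^sup>2"
    unfolding e by (rule sq_diff_le)
  have b3: "(norm ((z - zs) - \<rho> *\<^sub>R (B z - wm)))\<^sup>2 \<le> 2 * (norm (z - zs))\<^sup>2 + 2 * (norm (\<rho> *\<^sub>R (B z - wm)))\<^sup>2"
    by (rule sq_diff_le)
  have n1: "(norm (\<rho> *\<^sub>R ep))\<^sup>2 = \<rho>\<^sup>2 * (norm ep)\<^sup>2" by (simp add: power_mult_distrib)
  have n2: "(norm (\<rho> *\<^sub>R (B z - wm)))\<^sup>2 = \<rho>\<^sup>2 * (norm (B z - wm))\<^sup>2" by (simp add: power_mult_distrib)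
  have "(norm (xm - zs))\<^sup>2 \<le> 4 * (norm (z - zs))\<^sup>2 + 4 * \<rho>\<^sup>2 * (norm (B z - wm))\<^sup>2 + 2 * \<rho>\<^sup>2 * (norm ep)\<^sup>2"
    using b2 b3 unfolding n1 n2 by linarith
  then have "L\<^sup>2 * (norm (xm - zs))\<^sup>2 \<le> L\<^sup>2 * (4 * (norm (z - zs))\<^sup>2 + 4 * \<rho>\<^sup>2 * (norm (B z - wm))\<^sup>2 + 2 * \<rho>\<^sup>2 * (norm ep)\<^sup>2)"
    by (rule mult_left_mono) simp
  then show ?thesis using b1 by (simp add: algebra_simps)
qed


lemma P_facts:
  fixes l N :: real
  assumes l0: "0 \<le> l" and N0: "0 \<le> N"
  shows "l + N * l \<le> (l + 1)^2 * (N + 1)^2" "l * l \<le> (l + 1)^2 * (N + 1)^2" "l \<le> (l + 1)^2 * (N + 1)^2"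
    "N * (l * l) \<le> (l + 1)^2 * (N + 1)^2" "N * l \<le> (l + 1)^2 * (N + 1)^2"
    "N * N * (l * l) \<le> (l + 1)^2 * (N + 1)^2" "1 \<le> (l + 1)^2 * (N + 1)^2" "N * N * l \<le> (l + 1)^2 * (N + 1)^2"
    "N \<le> (l + 1)^2 * (N + 1)^2"
proof -
  have Pexp: "(l + 1)^2 * (N + 1)^2 = (l*l + 2*l + 1) * (N*N + 2*N + 1)" by (simp add: power2_eq_square algebra_simps)
  have lN: "0 \<le> l * N" "0 \<le> l * l" "0 \<le> l*l*N" "0 \<le> l*N*N" "0 \<le> l*l*N*N" "0 \<le> N*N" using l0 N0 by simp_all
  show "l + N * l \<le> (l + 1)^2 * (N + 1)^2" "l * l \<le> (l + 1)^2 * (N + 1)^2" "l \<le> (l + 1)^2 * (N + 1)^2"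
    "N * (l * l) \<le> (l + 1)^2 * (N + 1)^2" "N * l \<le> (l + 1)^2 * (N + 1)^2"
    "N * N * (l * l) \<le> (l + 1)^2 * (N + 1)^2" "1 \<le> (l + 1)^2 * (N + 1)^2" "N * N * l \<le> (l + 1)^2 * (N + 1)^2"
    "N \<le> (l + 1)^2 * (N + 1)^2"
    unfolding Pexp using lN l0 N0 by (simp_all add: algebra_simps)
qed

lemma coefKa:
  fixes m n l q N s t :: real
  assumes n1: "1 \<le> n" and m: "m = n + 1" and N0: "0 \<le> N" and q0: "0 \<le> q" and s0: "0 \<le> s" and ts: "t * s = 1"
    and l0: "0 \<le> l" and t0: "0 \<le> t"
  shows "(2 * m + t) * (2 * n * s) + (2 * m + (4 * l + 1) * q + 32 * N * l * q) * (2 * l)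
        + ((4 * l + 1) * q + 16 * N * l * q) * (2 * N * l) + 32 * N * l
     \<le> 24 * (1 + 10 * q) * m * (l + 1)^2 * (N + 1)^2 + 8 * m * (2 * t + 6 * m + 1 + 3 * m^2 * s)"
proof -
  define P where "P = (l + 1)^2 * (N + 1)^2"
  note PF = P_facts[OF l0 N0, folded P_def]
  have P0: "0 \<le> P" using PF by linarith
  have t1: "(2 * m + t) * (2 * n * s) = 4 * (m * n * s) + 2 * n"
    using ts by (simp add: algebra_simps)
  have A1: "m * n * s \<le> m * m * m * s"
  proof -
    have "n \<le> m * m" using n1 m by (simp add: algebra_simps)
    then have "m * n * s \<le> m * (m * m) * s" using m n1 s0 by (intro mult_right_mono mult_left_mono) auto
    then show ?thesis by (simp add: mult.assoc)
  qed
  have A3a: "24 * m * (l + N * l) \<le> 24 * m * P" using PF m n1 by (intro mult_left_mono) auto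
  have A3b: "N * l * 2 \<le> N * l * m" using m n1 N0 l0 by (intro mult_left_mono) auto
  have A4: "q * (8 * (l * l) + 2 * l + 64 * (N * (l * l)) + 8 * (N * (l * l)) + 2 * (N * l) + 32 * (N * N * (l * l))) \<le> q * (240 * m * P)"
  proof (rule mult_left_mono[OF _ q0])
    have "8 * (l * l) + 2 * l + 64 * (N * (l * l)) + 8 * (N * (l * l)) + 2 * (N * l) + 32 * (N * N * (l * l)) \<le> 116 * P"
      using PF by linarith
    also have "\<dots> \<le> 240 * m * P" using m n1 P0 by (intro mult_right_mono) auto
    finally show "8 * (l * l) + 2 * l + 64 * (N * (l * l)) + 8 * (N * (l * l)) + 2 * (N * l) + 32 * (N * N * (l * l)) \<le> 240 * m * P" .
  qed
  have pos: "0 \<le> m * t" "0 \<le> m * m" "0 \<le> s" "0 \<le> n * s" "0 \<le> n * (n * s)" "0 \<le> n * (n * (n * s))" "0 \<le> n * t" "0 \<le> n * n"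
    using m n1 t0 s0 by simp_all
  have eqC: "24 * (1 + 10 * q) * m * (l + 1)^2 * (N + 1)^2 = 24 * (1 + 10 * q) * m * P"
    unfolding P_def by (simp add: mult.assoc)
  have A1': "4 * (m * n * s) \<le> 24 * (m * m * m * s)"
  proof -
    have "0 \<le> m * m * m * s" using m n1 s0 by simp
    then show ?thesis using A1 by linarith
  qed
  have tt: "0 \<le> t + n * t" using t0 n1 by simp
  have hh: "0 \<le> 20 * l + 20 * (n * l) + 16 * (N * l) + 48 * (n * n)" using l0 n1 N0 by simp
  show ?thesis unfolding eqC t1 using A1' A3a A3b A4 tt hh m n1
    by (simp add: algebra_simps power2_eq_square power3_eq_cube)
qed

lemma coefDn:
  fixes m l q N s t P :: real
  assumes m1: "1 \<le> m" and q0: "0 \<le> q" and s0: "0 \<le> s" and t0: "0 \<le> t" and P0: "0 \<le> P"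
  shows "8 * (2 * m + t) \<le> 24 * (1 + 10 * q) * m * P + 8 * m * (2 * t + 6 * m + 1 + 3 * m^2 * s)"
proof -
  have e2: "24 * (1 + 10 * q) * m * P + 8 * m * (2 * t + 6 * m + 1 + 3 * m^2 * s)
      = 24 * (m * P) + 240 * (q * (m * P)) + 16 * (m * t) + 48 * (m * m) + 8 * m + 24 * (m^3 * s)"
    by (simp add: algebra_simps power2_eq_square power3_eq_cube)
  have f: "0 \<le> m * P" "0 \<le> q * (m * P)" "0 \<le> m^3 * s" "t \<le> m * t" "m \<le> m * m"
    using m1 q0 s0 t0 P0 by (simp_all add: mult_right_mono[of 1 m t, simplified] mult_right_mono[of 1 m m, simplified])
  have e0: "8 * (2 * m + t) = 16 * m + 8 * t" by simp
  show ?thesis unfolding e2 e0 using f m1 t0 by linarith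
qed

lemma coefdm:
  fixes m l q N s t P :: real
  assumes m1: "1 \<le> m" and q0: "0 \<le> q" and s0: "0 \<le> s" and t0: "0 \<le> t" and l0: "0 \<le> l" and N0: "0 \<le> N"
    and PF: "l \<le> P" "1 \<le> P" "N * l \<le> P"
  shows "2 * (2 * m + (4 * l + 1) * q + 32 * N * l * q) \<le> 24 * (1 + 10 * q) * m * P + 8 * m * (2 * t + 6 * m + 1 + 3 * m^2 * s)"
proof -
  have P0: "0 \<le> P" using PF by linarith
  have e1: "2 * (2 * m + (4 * l + 1) * q + 32 * N * l * q) = 4 * m + q * (8 * l + 2 + 64 * (N * l))"
    by (simp add: algebra_simps)
  have e2: "24 * (1 + 10 * q) * m * P + 8 * m * (2 * t + 6 * m + 1 + 3 * m^2 * s)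
      = 24 * (m * P) + q * (240 * m * P) + 16 * (m * t) + 48 * (m * m) + 8 * m + 24 * (m^3 * s)"
    by (simp add: algebra_simps power2_eq_square power3_eq_cube)
  have g1: "q * (8 * l + 2 + 64 * (N * l)) \<le> q * (240 * m * P)"
  proof (rule mult_left_mono[OF _ q0])
    have "8 * l + 2 + 64 * (N * l) \<le> 74 * P" using PF by linarith
    also have "\<dots> \<le> 240 * m * P" using m1 P0 by (intro mult_right_mono) auto
    finally show "8 * l + 2 + 64 * (N * l) \<le> 240 * m * P" .
  qed
  have f: "0 \<le> m * P" "0 \<le> m * t" "0 \<le> m * m" "0 \<le> m^3 * s"
    using m1 s0 t0 P0 by simp_all
  show ?thesis unfolding e1 e2 using f g1 m1 by linarith
qed

lemma coefb:
  fixes m l q N :: real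
  assumes m1: "1 \<le> m" and q0: "0 \<le> q" and l0: "0 \<le> l" and N0: "0 \<le> N"
  shows "2 * N * ((4 * l + 1) * q + 16 * N * l * q) + 8 * N \<le> 16 * (N + 1) * (1 + 4 * q * m + 9 * q * l * (N + 1)) + 8"
proof -
  have e1: "2 * N * ((4 * l + 1) * q + 16 * N * l * q) + 8 * N = q * (8 * (N * l) + 2 * N + 32 * (N * N * l)) + 8 * N"
    by (simp add: algebra_simps)
  have e2: "16 * (N + 1) * (1 + 4 * q * m + 9 * q * l * (N + 1)) + 8
     = 16 * N + 24 + q * (64 * (m * N) + 64 * m + 144 * (N * N * l) + 288 * (N * l) + 144 * l)"
    by (simp add: algebra_simps power2_eq_square)
  have i: "8 * (N * l) + 2 * N + 32 * (N * N * l) \<le> 64 * (m * N) + 64 * m + 144 * (N * N * l) + 288 * (N * l) + 144 * l"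
  proof -
    have "N \<le> m * N" using m1 N0 mult_right_mono[of 1 m N] by simp
    moreover have "0 \<le> N * l" "0 \<le> N * N * l" using N0 l0 by simp_all
    ultimately show ?thesis using m1 l0 N0 by linarith
  qed
  have "q * (8 * (N * l) + 2 * N + 32 * (N * N * l)) \<le> q * (64 * (m * N) + 64 * m + 144 * (N * N * l) + 288 * (N * l) + 144 * l)"
    by (rule mult_left_mono[OF i q0])
  then show ?thesis unfolding e1 e2 using N0 by linarith
qed

lemma coef0:
  fixes m l q N :: real
  assumes m1: "1 \<le> m" and q0: "0 \<le> q" and l0: "0 \<le> l" and N0: "0 \<le> N"
  shows "N * ((4 * l + 1) * q + 16 * N * l * q) + 4 * N \<le> 12 * q * N * (2 * l * (N + 1) + m) + 4 * N"
proof -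
  have e1: "N * ((4 * l + 1) * q + 16 * N * l * q) = q * (4 * (N * l) + N + 16 * (N * N * l))"
    by (simp add: algebra_simps)
  have e2: "12 * q * N * (2 * l * (N + 1) + m) = q * (24 * (N * N * l) + 24 * (N * l) + 12 * (m * N))"
    by (simp add: algebra_simps)
  have i: "4 * (N * l) + N + 16 * (N * N * l) \<le> 24 * (N * N * l) + 24 * (N * l) + 12 * (m * N)"
  proof -
    have "N \<le> m * N" using m1 N0 mult_right_mono[of 1 m N] by simp
    moreover have "0 \<le> N * l" "0 \<le> N * N * l" using N0 l0 by simp_all
    ultimately show ?thesis using N0 by linarith
  qed
  show ?thesis unfolding e1 e2 using mult_left_mono[OF i q0] by linarith
qed

lemma alpha2_total:
  fixes m n l q N N3 N4 s t a2 Dn dm2 b2 SY G2 V12 Sb R1 r2 :: real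
  assumes n1: "1 \<le> n" and m: "m = n + 1" and N0: "0 \<le> N" and N3: "0 \<le> N3" "N3 \<le> N" and N4: "0 \<le> N4" "N4 \<le> N"
    and l0: "0 \<le> l" and r20: "0 \<le> r2" and r2q: "r2 \<le> q" and s0: "0 \<le> s" and t0: "0 \<le> t" and ts: "t * s = 1"
    and a20: "0 \<le> a2" and Dn0: "0 \<le> Dn" and dm20: "0 \<le> dm2" and b20: "0 \<le> b2"
    and SY0: "0 \<le> SY" and G20: "0 \<le> G2" and Sb0: "0 \<le> Sb"
    and SYb: "SY \<le> 2 * n * a2 * s + 8 * Dn" and G2b: "G2 \<le> 2 * l * a2 + 2 * dm2"
    and Sbb: "Sb \<le> N + 2 * N * l * a2 + 2 * N * b2" and V12b: "V12 \<le> m * (SY + G2)"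
    and R1b: "R1 \<le> N4 * (8 * l * a2 + 8 * l * r2 * G2 + 2 * b2) + N3"
  shows "2 * V12 + t * SY + (4 * l + 1) * r2 * G2 + (4 * l + 1) * r2 * Sb + 4 * (R1 + 4 * N4 * l * r2 * Sb)
    \<le> (24 * (1 + 10 * q) * m * (l + 1)^2 * (N + 1)^2 + 8 * m * (2 * t + 6 * m + 1 + 3 * m^2 * s)) * (a2 + Dn + dm2)
       + (16 * (N + 1) * (1 + 4 * q * m + 9 * q * l * (N + 1)) + 8) * b2
       + (12 * q * N * (2 * l * (N + 1) + m) + 4 * N)"
proof -
  have q0: "0 \<le> q" using r20 r2q by linarith
  have m1: "1 \<le> m" using m n1 by simp
  define cSY where "cSY = 2 * m + t"
  define cG where "cG = 2 * m + (4 * l + 1) * q + 32 * N * l * q"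
  define cSb where "cSb = (4 * l + 1) * q + 16 * N * l * q"
  define C1 where "C1 = 24 * (1 + 10 * q) * m * (l + 1)^2 * (N + 1)^2 + 8 * m * (2 * t + 6 * m + 1 + 3 * m^2 * s)"
  define Cb where "Cb = 16 * (N + 1) * (1 + 4 * q * m + 9 * q * l * (N + 1)) + 8"
  define C0 where "C0 = 12 * q * N * (2 * l * (N + 1) + m) + 4 * N"
  define Ka where "Ka = cSY * (2 * n * s) + cG * (2 * l) + cSb * (2 * N * l) + 32 * N * l"
  have cSY0: "0 \<le> cSY" unfolding cSY_def using m1 t0 by simp
  have cG0: "0 \<le> cG" unfolding cG_def using m1 q0 l0 N0 by simp
  have cSb0: "0 \<le> cSb" unfolding cSb_def using q0 l0 N0 by simp
  have s1: "2 * V12 + t * SY + (4 * l + 1) * r2 * G2 + (4 * l + 1) * r2 * Sb + 4 * (R1 + 4 * N4 * l * r2 * Sb)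
      \<le> cSY * SY + cG * G2 + cSb * Sb + 32 * N * l * a2 + 8 * N * b2 + 4 * N"
  proof -
    have p1: "(4 * l + 1) * r2 * G2 \<le> (4 * l + 1) * q * G2"
      using r2q l0 G20 by (intro mult_right_mono mult_left_mono) auto
    have p2: "(4 * l + 1) * r2 * Sb \<le> (4 * l + 1) * q * Sb"
      using r2q l0 Sb0 by (intro mult_right_mono mult_left_mono) auto
    have p3: "N4 * (8 * l * a2) \<le> N * (8 * l * a2)" using N4 l0 a20 by (intro mult_right_mono) auto
    have p4: "N4 * (8 * l * r2 * G2) \<le> N * (8 * l * q * G2)"
      using N4 r2q r20 l0 G20 N0 by (intro mult_mono mult_right_mono mult_left_mono) auto
    have p5: "N4 * (2 * b2) \<le> N * (2 * b2)" using N4 b20 by (intro mult_right_mono) auto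
    have p6: "N4 * l * r2 * Sb \<le> N * l * q * Sb"
      using N4 r2q r20 l0 Sb0 N0 by (intro mult_mono mult_right_mono mult_left_mono) auto
    have p7: "2 * V12 \<le> 2 * m * SY + 2 * m * G2" using V12b by (simp add: algebra_simps)
    show ?thesis unfolding cSY_def cG_def cSb_def using p1 p2 p3 p4 p5 p6 p7 R1b N3 by (simp add: algebra_simps)
  qed
  have s2: "cSY * SY + cG * G2 + cSb * Sb \<le> cSY * (2 * n * a2 * s + 8 * Dn) + cG * (2 * l * a2 + 2 * dm2) + cSb * (N + 2 * N * l * a2 + 2 * N * b2)"
    using mult_left_mono[OF SYb cSY0] mult_left_mono[OF G2b cG0] mult_left_mono[OF Sbb cSb0] by linarith
  have s3: "cSY * (2 * n * a2 * s + 8 * Dn) + cG * (2 * l * a2 + 2 * dm2) + cSb * (N + 2 * N * l * a2 + 2 * N * b2)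
        + 32 * N * l * a2 + 8 * N * b2 + 4 * N
      = Ka * a2 + (8 * cSY) * Dn + (2 * cG) * dm2 + (2 * N * cSb + 8 * N) * b2 + (N * cSb + 4 * N)"
    unfolding Ka_def by (simp add: algebra_simps)
  have kA: "Ka \<le> C1" unfolding Ka_def C1_def cSY_def cG_def cSb_def
    by (rule coefKa[OF n1 m N0 q0 s0 ts l0 t0])
  note PF = P_facts[OF l0 N0]
  have C1eq: "C1 = 24 * (1 + 10 * q) * m * ((l + 1)^2 * (N + 1)^2) + 8 * m * (2 * t + 6 * m + 1 + 3 * m^2 * s)"
    unfolding C1_def by (simp add: mult.assoc)
  have kD: "8 * cSY \<le> C1" unfolding C1eq cSY_def
    by (rule coefDn[OF m1 q0 s0 t0]) (use PF in linarith)
  have kd: "2 * cG \<le> C1" unfolding C1eq cG_def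
    by (rule coefdm[OF m1 q0 s0 t0 l0 N0]) (use PF in \<open>simp_all add: mult.commute\<close>)
  have kb: "2 * N * cSb + 8 * N \<le> Cb" unfolding Cb_def cSb_def
    using coefb[OF m1 q0 l0 N0] by (simp add: mult.assoc)
  have k0: "N * cSb + 4 * N \<le> C0" unfolding C0_def cSb_def by (rule coef0[OF m1 q0 l0 N0])
  have f1: "Ka * a2 \<le> C1 * a2" using kA a20 by (rule mult_right_mono)
  have f2: "(8 * cSY) * Dn \<le> C1 * Dn" using kD Dn0 by (rule mult_right_mono)
  have f3: "(2 * cG) * dm2 \<le> C1 * dm2" using kd dm20 by (rule mult_right_mono)
  have f4: "(2 * N * cSb + 8 * N) * b2 \<le> Cb * b2" using kb b20 by (rule mult_right_mono)
  have C1d: "C1 * (a2 + Dn + dm2) = C1 * a2 + C1 * Dn + C1 * dm2" by (simp add: algebra_simps)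
  have "2 * V12 + t * SY + (4 * l + 1) * r2 * G2 + (4 * l + 1) * r2 * Sb + 4 * (R1 + 4 * N4 * l * r2 * Sb)
    \<le> C1 * (a2 + Dn + dm2) + Cb * b2 + C0"
    unfolding C1d using s1 s2 s3 f1 f2 f3 f4 k0 by linarith
  then show ?thesis unfolding C1_def Cb_def C0_def .
qed

lemma final_ineq:
  fixes \<alpha> \<rho> \<rho>b \<tau> L N N1 N2 Nc Nd Ca Cc D SY Sx GG VV Sb RR aa Dn dd bb sww :: real and n :: nat
  assumes al: "0 \<le> \<alpha>" and rh: "0 \<le> \<rho>" "\<rho> \<le> \<rho>b" and tau: "0 < \<tau>" and L: "0 < L" and n1: "1 \<le> n"
    and Ns: "0 \<le> Nc" "Nc \<le> N" "0 \<le> Nd" "Nd \<le> N" "0 \<le> N"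
    and a20: "0 \<le> aa" and Dn0: "0 \<le> Dn" and dm20: "0 \<le> dd" and b20: "0 \<le> bb"
    and Deq: "D = aa + Dn + dd" and SY0: "0 \<le> SY" and Sxeq: "Sx = \<tau>\<^sup>2 * SY" and G20: "0 \<le> GG" and Sb0: "0 \<le> Sb"
    and SYb: "SY \<le> 2 * real n * aa / \<tau>\<^sup>2 + 8 * Dn" and G2b: "GG \<le> 2 * L\<^sup>2 * aa + 2 * dd"
    and Sbb: "Sb \<le> N + 2 * N * L\<^sup>2 * aa + 2 * N * bb" and V12b: "VV \<le> real (n+1) * (SY + GG)"
    and R1b: "RR \<le> Nd * (8 * L\<^sup>2 * aa + 8 * L\<^sup>2 * \<rho>\<^sup>2 * GG + 2 * bb) + Nc"
    and sww: "sww = bb"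
    and C1_def: "Ca = 24 * (1 + 10 * \<rho>b\<^sup>2) * real (n+1) * (L\<^sup>2 + 1)\<^sup>2 * (N + 1)\<^sup>2
                    + 8 * real (n+1) * (2 * \<tau>\<^sup>2 + 6 * real (n+1) + 1 + 3 * (real (n+1))\<^sup>2 / \<tau>\<^sup>2)"
    and C3_def: "Cc = 4 * N * L ^ 3"
  shows "D - 2 * \<alpha> * \<tau> * SY - 2 * \<alpha> * \<rho> * (1 - L * \<rho>) * GG
          + \<alpha>\<^sup>2 * (2 * VV + \<tau>\<^sup>2 * SY + (4 * L\<^sup>2 + 1) * \<rho>\<^sup>2 * GG)
        + (2 * \<alpha> * L * \<rho>\<^sup>2 + \<alpha>\<^sup>2 * (4 * L\<^sup>2 + 1) * \<rho>\<^sup>2) * Sb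
        + 4 * \<alpha>\<^sup>2 * (RR + 4 * Nd * L\<^sup>2 * \<rho>\<^sup>2 * Sb)
    \<le> (1 + Ca * \<alpha>\<^sup>2 + Cc * \<alpha> * \<rho>\<^sup>2) * D
       - \<alpha> * \<rho> * ((\<tau> / \<rho>b) * SY + (1 / (\<rho>b * \<tau>)) * Sx + 2 * (1 - \<rho>b * L) * GG)
       + (16 * (N + 1) * (1 + 4 * \<rho>b\<^sup>2 * real (n+1) + 9 * \<rho>b\<^sup>2 * L\<^sup>2 * (N + 1)) * bb
          + 8 * sww + 12 * \<rho>b\<^sup>2 * N * (2 * L\<^sup>2 * (N + 1) + real (n+1)) + 4 * N) * \<alpha>\<^sup>2
       + (2 * N * L * (1 + 2 * bb)) * \<alpha> * \<rho>\<^sup>2"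
proof -
  define Quad where "Quad = 2 * VV + \<tau>\<^sup>2 * SY + (4 * L\<^sup>2 + 1) * \<rho>\<^sup>2 * GG + (4 * L\<^sup>2 + 1) * \<rho>\<^sup>2 * Sb + 4 * (RR + 4 * Nd * L\<^sup>2 * \<rho>\<^sup>2 * Sb)"
  define Lin where "Lin = - 2 * \<tau> * SY - 2 * \<rho> * (1 - L * \<rho>) * GG + 2 * L * \<rho>\<^sup>2 * Sb"
  define C2 where "C2 = 16 * (N + 1) * (1 + 4 * \<rho>b\<^sup>2 * real (n+1) + 9 * \<rho>b\<^sup>2 * L\<^sup>2 * (N + 1)) * bb
          + 8 * sww + 12 * \<rho>b\<^sup>2 * N * (2 * L\<^sup>2 * (N + 1) + real (n+1)) + 4 * N"
  define LinH where "LinH = Cc * \<rho>\<^sup>2 * D - \<rho> * ((\<tau> / \<rho>b) * SY + (1 / (\<rho>b * \<tau>)) * Sx + 2 * (1 - \<rho>b * L) * GG) + (2 * N * L * (1 + 2 * bb)) * \<rho>\<^sup>2"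
  have eL: "D - 2 * \<alpha> * \<tau> * SY - 2 * \<alpha> * \<rho> * (1 - L * \<rho>) * GG
          + \<alpha>\<^sup>2 * (2 * VV + \<tau>\<^sup>2 * SY + (4 * L\<^sup>2 + 1) * \<rho>\<^sup>2 * GG)
        + (2 * \<alpha> * L * \<rho>\<^sup>2 + \<alpha>\<^sup>2 * (4 * L\<^sup>2 + 1) * \<rho>\<^sup>2) * Sb
        + 4 * \<alpha>\<^sup>2 * (RR + 4 * Nd * L\<^sup>2 * \<rho>\<^sup>2 * Sb) = D + \<alpha> * Lin + \<alpha>\<^sup>2 * Quad"
    unfolding Lin_def Quad_def by (simp add: algebra_simps)
  have eH: "(1 + Ca * \<alpha>\<^sup>2 + Cc * \<alpha> * \<rho>\<^sup>2) * D
       - \<alpha> * \<rho> * ((\<tau> / \<rho>b) * SY + (1 / (\<rho>b * \<tau>)) * Sx + 2 * (1 - \<rho>b * L) * GG)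
       + C2 * \<alpha>\<^sup>2 + (2 * N * L * (1 + 2 * bb)) * \<alpha> * \<rho>\<^sup>2 = D + \<alpha> * LinH + \<alpha>\<^sup>2 * (Ca * D + C2)"
    unfolding LinH_def by (simp add: algebra_simps)
  have rb0: "0 \<le> \<rho>b" using rh by linarith
  have Qb: "Quad \<le> Ca * D + C2"
  proof -
    have r2q: "\<rho>\<^sup>2 \<le> \<rho>b\<^sup>2" using rh by (simp add: power_mono)
    have t0: "0 \<le> \<tau>\<^sup>2" by simp
    have ts: "\<tau>\<^sup>2 * (1 / \<tau>\<^sup>2) = 1" using tau by simp
    have s0: "0 \<le> 1 / \<tau>\<^sup>2" by simp
    have SYb': "SY \<le> 2 * real n * aa * (1 / \<tau>\<^sup>2) + 8 * Dn" using SYb by simp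
    have A: "Quad \<le> (24 * (1 + 10 * \<rho>b\<^sup>2) * real (n+1) * (L\<^sup>2 + 1)^2 * (N + 1)^2 + 8 * real (n+1) * (2 * \<tau>\<^sup>2 + 6 * real (n+1) + 1 + 3 * (real (n+1))^2 * (1 / \<tau>\<^sup>2))) * (aa + Dn + dd)
       + (16 * (N + 1) * (1 + 4 * \<rho>b\<^sup>2 * real (n+1) + 9 * \<rho>b\<^sup>2 * L\<^sup>2 * (N + 1)) + 8) * bb
       + (12 * \<rho>b\<^sup>2 * N * (2 * L\<^sup>2 * (N + 1) + real (n+1)) + 4 * N)"
      unfolding Quad_def
      by (rule alpha2_total[of "real n" "real (n+1)" N Nc Nd "L\<^sup>2" "\<rho>\<^sup>2" "\<rho>b\<^sup>2" "1 / \<tau>\<^sup>2" "\<tau>\<^sup>2"])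
         (use n1 Ns r2q ts a20 Dn0 dm20 b20 SY0 G20 Sb0 SYb' G2b Sbb V12b R1b in \<open>simp_all add: mult.commute mult.left_commute\<close>)
    have "3 * (real (n+1))^2 * (1 / \<tau>\<^sup>2) = 3 * (real (n+1))\<^sup>2 / \<tau>\<^sup>2" by simp
    then show ?thesis using A unfolding C1_def C2_def Deq sww by (simp add: algebra_simps)
  qed
  have Lb: "Lin \<le> LinH"
  proof (cases "\<rho> = 0")
    case True
    then show ?thesis unfolding Lin_def LinH_def using tau SY0 by simp
  next
    case False
    then have rp: "0 < \<rho>" using rh by simp
    then have rbp: "0 < \<rho>b" using rh by simp
    have l1: "\<rho> * ((\<tau> / \<rho>b) * SY + (1 / (\<rho>b * \<tau>)) * Sx) \<le> 2 * \<tau> * SY"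
    proof -
      have "(1 / (\<rho>b * \<tau>)) * Sx = (\<tau> / \<rho>b) * SY" unfolding Sxeq using tau by (simp add: power2_eq_square field_simps)
      then have "\<rho> * ((\<tau> / \<rho>b) * SY + (1 / (\<rho>b * \<tau>)) * Sx) = 2 * (\<rho> / \<rho>b) * (\<tau> * SY)" by (simp add: field_simps)
      also have "\<dots> \<le> 2 * 1 * (\<tau> * SY)" using rh rbp tau SY0 by (intro mult_right_mono mult_left_mono) auto
      finally show ?thesis by simp
    qed
    have l2: "\<rho> * (1 - \<rho>b * L) * GG \<le> \<rho> * (1 - L * \<rho>) * GG"
      using rh L G20 by (intro mult_right_mono mult_left_mono) (auto simp: mult.commute mult_left_mono)
    have l3: "2 * L * \<rho>\<^sup>2 * Sb \<le> Cc * \<rho>\<^sup>2 * D + (2 * N * L * (1 + 2 * bb)) * \<rho>\<^sup>2"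
    proof -
      have "2 * L * Sb \<le> 2 * L * (N + 2 * N * L\<^sup>2 * aa + 2 * N * bb)" using Sbb L by simp
      also have "\<dots> = 4 * N * L ^ 3 * aa + 2 * N * L * (1 + 2 * bb)" by (simp add: algebra_simps power2_eq_square power3_eq_cube)
      also have "\<dots> \<le> 4 * N * L ^ 3 * D + 2 * N * L * (1 + 2 * bb)"
        using Deq Dn0 dm20 Ns L by (intro add_right_mono mult_left_mono) auto
      finally have "2 * L * Sb \<le> Cc * D + 2 * N * L * (1 + 2 * bb)" unfolding C3_def .
      then have "\<rho>\<^sup>2 * (2 * L * Sb) \<le> \<rho>\<^sup>2 * (Cc * D + 2 * N * L * (1 + 2 * bb))" by (simp add: mult_left_mono)
      then show ?thesis by (simp add: algebra_simps)
    qed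
    have e: "LinH = Cc * \<rho>\<^sup>2 * D - \<rho> * ((\<tau> / \<rho>b) * SY + (1 / (\<rho>b * \<tau>)) * Sx) - 2 * (\<rho> * (1 - \<rho>b * L) * GG) + (2 * N * L * (1 + 2 * bb)) * \<rho>\<^sup>2"
      unfolding LinH_def by (simp add: algebra_simps)
    have e2: "Lin = - 2 * \<tau> * SY - 2 * (\<rho> * (1 - L * \<rho>) * GG) + 2 * L * \<rho>\<^sup>2 * Sb" unfolding Lin_def by simp
    show ?thesis unfolding e e2 using l1 l2 l3 by linarith
  qed
  have "D + \<alpha> * Lin + \<alpha>\<^sup>2 * Quad \<le> D + \<alpha> * LinH + \<alpha>\<^sup>2 * (Ca * D + C2)"
    using mult_left_mono[OF Lb al] mult_left_mono[OF Qb, of "\<alpha>\<^sup>2"] by simp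
  then show ?thesis unfolding eL eH[unfolded C2_def] C2_def .
qed


lemma meas_ext_dist2:
  fixes zf :: "'m \<Rightarrow> 'a::euclidean_space" and wf :: "nat \<Rightarrow> 'm \<Rightarrow> 'a"
  assumes "zf \<in> borel_measurable Mx" "\<And>i. i \<in> {1..n+1} \<Longrightarrow> wf i \<in> borel_measurable Mx"
  shows "(\<lambda>\<omega>. ext_dist2 n (zf \<omega>) (\<lambda>i. wf i \<omega>) zs ws) \<in> borel_measurable Mx"
  unfolding ext_dist2_def
proof (intro borel_measurable_add borel_measurable_sum)
  show "(\<lambda>x. (norm (zf x - zs))\<^sup>2) \<in> borel_measurable Mx" using assms(1) by measurable
  fix i assume "i \<in> {1..n+1}"
  then have [measurable]: "wf i \<in> borel_measurable Mx" by (rule assms(2))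
  show "(\<lambda>x. (norm (wf i x - ws i))\<^sup>2) \<in> borel_measurable Mx" by measurable
qed

lemma sum_sub_scale:
  fixes a b :: "nat \<Rightarrow> 'a::real_vector"
  shows "(\<Sum>i\<in>I. a i - c *\<^sub>R b i) = (\<Sum>i\<in>I. a i) - c *\<^sub>R (\<Sum>i\<in>I. b i)"
  by (simp add: sum_subtractf scaleR_sum_right)

lemma SY_sum_bound:
  fixes Y W :: "nat \<Rightarrow> 'a::real_normed_vector"
  assumes "\<And>i. i \<in> {1..n} \<Longrightarrow> norm (Y i) \<le> c + 2 * norm (W i)" and c: "c \<ge> 0"
  shows "(\<Sum>i=1..n. (norm (Y i))\<^sup>2) \<le> 2 * real n * c\<^sup>2 + 8 * (\<Sum>i=1..n. (norm (W i))\<^sup>2)"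
proof -
  have "(\<Sum>i=1..n. (norm (Y i))\<^sup>2) \<le> (\<Sum>i=1..n. 2 * c\<^sup>2 + 8 * (norm (W i))\<^sup>2)"
  proof (rule sum_mono)
    fix i assume i: "i \<in> {1..n}"
    have "(norm (Y i))\<^sup>2 \<le> (c + 2 * norm (W i))\<^sup>2" using assms(1)[OF i] by (simp add: power_mono)
    also have "\<dots> \<le> 2 * c\<^sup>2 + 8 * (norm (W i))\<^sup>2"
      using sum_squares_bound[of c "2 * norm (W i)"] by (simp add: power2_eq_square algebra_simps)
    finally show "(norm (Y i))\<^sup>2 \<le> 2 * c\<^sup>2 + 8 * (norm (W i))\<^sup>2" .
  qed
  also have "\<dots> = 2 * real n * c\<^sup>2 + 8 * (\<Sum>i=1..n. (norm (W i))\<^sup>2)"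
    by (simp add: sum.distrib sum_distrib_left)
  finally show ?thesis .
qed

theorem lemma3:
  fixes M :: "'m measure"
    and n :: nat
    and A :: "nat \<Rightarrow> 'a::euclidean_space \<Rightarrow> 'a set"
    and B :: "'a \<Rightarrow> 'a"
    and L \<tau> \<rho>b N1 N2 N3 N4 N C1 C3 :: real
    and \<alpha> \<rho> :: "nat \<Rightarrow> real"
    and z :: "nat \<Rightarrow> 'm \<Rightarrow> 'a"
    and w x y :: "nat \<Rightarrow> nat \<Rightarrow> 'm \<Rightarrow> 'a"
    and eps e :: "nat \<Rightarrow> 'm \<Rightarrow> 'a"
    and F FE :: "nat \<Rightarrow> 'm measure"
  assumes M: "prob_space M"
    and n: "n \<ge> 1"
    and A_mm: "\<forall>i\<in>{1..n}. maximal_monotone (A i)"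
    and B_mono: "monotone_fun B"
    and L_pos: "L > 0"
    and B_lip: "L-lipschitz_on UNIV B"
    and S_ne: "\<exists>zs ws. ext_sol n A B zs ws"
    and tau_pos: "\<tau> > 0"
    and alpha_pos: "\<forall>k\<ge>1. \<alpha> k > 0"
    and rho_bd: "\<forall>k\<ge>1. 0 < \<rho> k \<and> \<rho> k \<le> \<rho>b"
    and rhob_lt: "\<rho>b < 1 / L"
    \<comment> \<open>initial point p^1\<close>
    and init_meas: "z 1 \<in> borel_measurable M" "\<forall>i\<in>{1..n+1}. w 1 i \<in> borel_measurable M"
    and init_sum: "\<forall>\<omega>. (\<Sum>i=1..n+1. w 1 i \<omega>) = 0"
    \<comment> \<open>Algorithm SPS\<close>
    and alg_x: "\<forall>k\<ge>1. \<forall>i\<in>{1..n}. \<forall>\<omega>. x k i \<omega> = resolvent \<tau> (A i) (z k \<omega> + \<tau> *\<^sub>R w k i \<omega>)"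
    and alg_y: "\<forall>k\<ge>1. \<forall>i\<in>{1..n}. \<forall>\<omega>.
                  y k i \<omega> = (1 / \<tau>) *\<^sub>R ((z k \<omega> + \<tau> *\<^sub>R w k i \<omega>) - x k i \<omega>)"
    and alg_xn: "\<forall>k\<ge>1. \<forall>\<omega>.
                  x k (n+1) \<omega> = z k \<omega> - \<rho> k *\<^sub>R ((B (z k \<omega>) + eps k \<omega>) - w k (n+1) \<omega>)"
    and alg_yn: "\<forall>k\<ge>1. \<forall>\<omega>. y k (n+1) \<omega> = B (x k (n+1) \<omega>) + e k \<omega>"
    and alg_z: "\<forall>k\<ge>1. \<forall>\<omega>. z (k+1) \<omega> = z k \<omega> - \<alpha> k *\<^sub>R (\<Sum>i=1..n+1. y k i \<omega>)"
    and alg_w: "\<forall>k\<ge>1. \<forall>i\<in>{1..n+1}. \<forall>\<omega>.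
                  w (k+1) i \<omega> = w k i \<omega> - \<alpha> k *\<^sub>R (x k i \<omega> - (1 / real (n+1)) *\<^sub>R (\<Sum>j=1..n+1. x k j \<omega>))"
    \<comment> \<open>noise variables\<close>
    and noise_rv: "\<forall>k\<ge>1. eps k \<in> borel_measurable M \<and> e k \<in> borel_measurable M"
    and noise_int: "\<forall>k\<ge>1. integrable M (eps k) \<and> integrable M (e k)"
    \<comment> \<open>filtrations F_k = sigma(p^1..p^k) and sigma(F_k, E_k), E_k = sigma(eps^k)\<close>
    and F_def: "\<forall>k. F k = gen_sigma M ({z j | j. 1 \<le> j \<and> j \<le> k}
                   \<union> {w j i | j i. 1 \<le> j \<and> j \<le> k \<and> 1 \<le> i \<and> i \<le> n+1})"
    and FE_def: "\<forall>k. FE k = gen_sigma M ({z j | j. 1 \<le> j \<and> j \<le> k}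
                   \<union> {w j i | j i. 1 \<le> j \<and> j \<le> k \<and> 1 \<le> i \<and> i \<le> n+1} \<union> {eps k})"
    and N_nonneg: "0 \<le> N1" "0 \<le> N2" "0 \<le> N3" "0 \<le> N4"
    and N_def: "N = max (max N1 N2) (max N3 N4)"
    and noise_cond: "AE \<omega> in M. \<forall>k\<ge>1.
         (\<forall>b\<in>Basis. real_cond_exp M (F k) (\<lambda>\<omega>. inner (eps k \<omega>) b) \<omega> = 0)
       \<and> (\<forall>b\<in>Basis. real_cond_exp M (F k) (\<lambda>\<omega>. inner (e k \<omega>) b) \<omega> = 0)
       \<and> nn_cond_exp M (F k) (\<lambda>\<omega>. ennreal ((norm (eps k \<omega>))\<^sup>2)) \<omega>
            \<le> ennreal (N1 + N2 * (norm (B (z k \<omega>)))\<^sup>2)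
       \<and> nn_cond_exp M (FE k) (\<lambda>\<omega>. ennreal ((norm (e k \<omega>))\<^sup>2)) \<omega>
            \<le> ennreal (N3 + N4 * (norm (B (x k (n+1) \<omega>)))\<^sup>2)"
    and C1_def: "C1 = 24 * (1 + 10 * \<rho>b\<^sup>2) * real (n+1) * (L\<^sup>2 + 1)\<^sup>2 * (N + 1)\<^sup>2
                    + 8 * real (n+1) * (2 * \<tau>\<^sup>2 + 6 * real (n+1) + 1 + 3 * (real (n+1))\<^sup>2 / \<tau>\<^sup>2)"
    and C3_def: "C3 = 4 * N * L ^ 3"
  shows "\<forall>zs ws. ext_sol n A B zs ws \<longrightarrow>
    (let C2 = 16 * (N + 1) * (1 + 4 * \<rho>b\<^sup>2 * real (n+1) + 9 * \<rho>b\<^sup>2 * L\<^sup>2 * (N + 1)) * (norm (B zs))\<^sup>2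
              + 8 * (norm (\<Sum>i=1..n. ws i))\<^sup>2
              + 12 * \<rho>b\<^sup>2 * N * (2 * L\<^sup>2 * (N + 1) + real (n+1)) + 4 * N;
         C4 = 2 * N * L * (1 + 2 * (norm (B zs))\<^sup>2)
     in AE \<omega> in M. \<forall>k\<ge>1.
        nn_cond_exp M (F k) (\<lambda>\<omega>. ennreal (ext_dist2 n (z (k+1) \<omega>) (\<lambda>i. w (k+1) i \<omega>) zs ws)) \<omega>
        \<le> ennreal ((1 + C1 * (\<alpha> k)\<^sup>2 + C3 * \<alpha> k * (\<rho> k)\<^sup>2) * ext_dist2 n (z k \<omega>) (\<lambda>i. w k i \<omega>) zs ws
             - \<alpha> k * \<rho> k *
                 ((\<tau> / \<rho>b) * (\<Sum>i=1..n. (norm (y k i \<omega> - w k i \<omega>))\<^sup>2)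
                  + (1 / (\<rho>b * \<tau>)) * (\<Sum>i=1..n. (norm (z k \<omega> - x k i \<omega>))\<^sup>2)
                  + 2 * (1 - \<rho>b * L) * (norm (B (z k \<omega>) - w k (n+1) \<omega>))\<^sup>2)
             + C2 * (\<alpha> k)\<^sup>2 + C4 * \<alpha> k * (\<rho> k)\<^sup>2))"
proof -
  interpret prob_space M by (rule M)
  have L0: "L \<ge> 0" using L_pos by simp
  have Bcont: "continuous_on UNIV B" using B_lip by (rule lipschitz_on_continuous_on)
  have Jcont: "continuous_on UNIV (resolvent \<tau> (A i))" if i: "i \<in> {1..n}" for i
  proof -
    have "1-lipschitz_on UNIV (resolvent \<tau> (A i))"
      by (rule lipschitz_onI) (use resolvent_nonexp(1)[OF A_mm[rule_format, OF i] tau_pos] in \<open>auto simp: dist_norm\<close>)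
    then show ?thesis by (rule lipschitz_on_continuous_on)
  qed
  have mB: "(\<lambda>\<omega>. B (f \<omega>)) \<in> borel_measurable Mx" if "f \<in> borel_measurable Mx" for f :: "'m \<Rightarrow> 'a" and Mx
    using borel_measurable_continuous_on[OF Bcont that] .
  have mJ: "(\<lambda>\<omega>. resolvent \<tau> (A i) (f \<omega>)) \<in> borel_measurable Mx"
    if "i \<in> {1..n}" "f \<in> borel_measurable Mx" for i and f :: "'m \<Rightarrow> 'a" and Mx
    using borel_measurable_continuous_on[OF Jcont[OF that(1)] that(2)] .
  have xeq: "x k i = (\<lambda>\<omega>. resolvent \<tau> (A i) (z k \<omega> + \<tau> *\<^sub>R w k i \<omega>))" if "k \<ge> 1" "i \<in> {1..n}" for k i
    using alg_x that by auto
  have yeq: "y k i = (\<lambda>\<omega>. (1 / \<tau>) *\<^sub>R ((z k \<omega> + \<tau> *\<^sub>R w k i \<omega>) - x k i \<omega>))" if "k \<ge> 1" "i \<in> {1..n}" for k i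
    using alg_y that by auto
  have xneq: "x k (n+1) = (\<lambda>\<omega>. z k \<omega> - \<rho> k *\<^sub>R ((B (z k \<omega>) + eps k \<omega>) - w k (n+1) \<omega>))" if "k \<ge> 1" for k
    using alg_xn that by auto
  have yneq: "y k (n+1) = (\<lambda>\<omega>. B (x k (n+1) \<omega>) + e k \<omega>)" if "k \<ge> 1" for k
    using alg_yn that by auto
  have mxy: "x k i \<in> borel_measurable Mx \<and> y k i \<in> borel_measurable Mx"
    if k: "k \<ge> 1" and i: "i \<in> {1..n}" and mz: "z k \<in> borel_measurable Mx" and mw: "w k i \<in> borel_measurable Mx" for k i Mx
  proof -
    have [measurable]: "z k \<in> borel_measurable Mx" "w k i \<in> borel_measurable Mx" using mz mw by auto
    have mx: "x k i \<in> borel_measurable Mx" unfolding xeq[OF k i] by (rule mJ[OF i]) measurable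
    have [measurable]: "x k i \<in> borel_measurable Mx" by (rule mx)
    have "y k i \<in> borel_measurable Mx" unfolding yeq[OF k i] by measurable
    with mx show ?thesis by simp
  qed
  have mxyn: "x k (n+1) \<in> borel_measurable M \<and> y k (n+1) \<in> borel_measurable M"
    if k: "k \<ge> 1" and mz: "z k \<in> borel_measurable M" and mw: "w k (n+1) \<in> borel_measurable M" for k
  proof -
    have [measurable]: "z k \<in> borel_measurable M" "w k (n+1) \<in> borel_measurable M"
      "eps k \<in> borel_measurable M" "e k \<in> borel_measurable M" using mz mw noise_rv k by auto
    have [measurable]: "(\<lambda>\<omega>. B (z k \<omega>)) \<in> borel_measurable M" by (rule mB) simp
    have mx: "x k (n+1) \<in> borel_measurable M" unfolding xneq[OF k] by measurable
    have [measurable]: "(\<lambda>\<omega>. B (x k (n+1) \<omega>)) \<in> borel_measurable M" by (rule mB[OF mx])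
    have "y k (n+1) \<in> borel_measurable M" unfolding yneq[OF k] by measurable
    with mx show ?thesis by simp
  qed
  have meas: "z k \<in> borel_measurable M \<and> (\<forall>i\<in>{1..n+1}. w k i \<in> borel_measurable M)" if "k \<ge> 1" for k
    using that
  proof (induction k rule: dec_induct)
    case base
    then show ?case using init_meas by simp
  next
    case (step k)
    have k: "k \<ge> 1" by fact
    have mz: "z k \<in> borel_measurable M" and mw: "\<And>i. i \<in> {1..n+1} \<Longrightarrow> w k i \<in> borel_measurable M"
      using step.IH by auto
    have my: "y k i \<in> borel_measurable M" if "i \<in> {1..n+1}" for i
    proof (cases "i = n+1")
      case True then show ?thesis using mxyn[OF k mz mw] by simp
    next
      case False then have "i \<in> {1..n}" using that by auto
      then show ?thesis using mxy[OF k _ mz mw] that by auto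
    qed
    have mx: "x k i \<in> borel_measurable M" if "i \<in> {1..n+1}" for i
    proof (cases "i = n+1")
      case True then show ?thesis using mxyn[OF k mz mw] by simp
    next
      case False then have "i \<in> {1..n}" using that by auto
      then show ?thesis using mxy[OF k _ mz mw] that by auto
    qed
    have ez: "z (Suc k) = (\<lambda>\<omega>. z k \<omega> - \<alpha> k *\<^sub>R (\<Sum>i=1..n+1. y k i \<omega>))" using alg_z k by auto
    have msy: "(\<lambda>\<omega>. \<Sum>i=1..n+1. y k i \<omega>) \<in> borel_measurable M"
      by (rule borel_measurable_sum) (use my in auto)
    have msx: "(\<lambda>\<omega>. \<Sum>i=1..n+1. x k i \<omega>) \<in> borel_measurable M"
      by (rule borel_measurable_sum) (use mx in auto)
    have [measurable]: "z k \<in> borel_measurable M" by (rule mz)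
    have "z (Suc k) \<in> borel_measurable M" unfolding ez using msy by measurable
    moreover have "w (Suc k) i \<in> borel_measurable M" if i: "i \<in> {1..n+1}" for i
    proof -
      have ew: "w (Suc k) i = (\<lambda>\<omega>. w k i \<omega> - \<alpha> k *\<^sub>R (x k i \<omega> - (1 / real (n+1)) *\<^sub>R (\<Sum>j=1..n+1. x k j \<omega>)))"
        using alg_w k i by auto
      have [measurable]: "w k i \<in> borel_measurable M" "x k i \<in> borel_measurable M" using mw[OF i] mx[OF i] by auto
      show ?thesis unfolding ew using msx by measurable
    qed
    ultimately show ?case by simp
  qed
  have sumw: "(\<Sum>i=1..n+1. w k i \<omega>) = 0" if "k \<ge> 1" for k \<omega>
    using that
  proof (induction k rule: dec_induct)
    case base then show ?case using init_sum by simp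
  next
    case (step k)
    have k: "k \<ge> 1" by fact
    have "(\<Sum>i=1..n+1. w (Suc k) i \<omega>) = (\<Sum>i=1..n+1. w k i \<omega> - \<alpha> k *\<^sub>R (x k i \<omega> - (1 / real (n+1)) *\<^sub>R (\<Sum>j=1..n+1. x k j \<omega>)))"
      using alg_w k by (intro sum.cong) auto
    also have "\<dots> = (\<Sum>i=1..n+1. w k i \<omega>) - \<alpha> k *\<^sub>R (\<Sum>i=1..n+1. x k i \<omega> - (1 / real (n+1)) *\<^sub>R (\<Sum>j=1..n+1. x k j \<omega>))"
      by (rule sum_sub_scale)
    also have "(\<Sum>i=1..n+1. x k i \<omega> - (1 / real (n+1)) *\<^sub>R (\<Sum>j=1..n+1. x k j \<omega>)) = 0"
    proof -
      define S where "S = (\<Sum>j=1..n+1. x k j \<omega>)"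
      have "(\<Sum>i=1..n+1. x k i \<omega> - (1 / real (n+1)) *\<^sub>R S) = S - real (n+1) *\<^sub>R ((1 / real (n+1)) *\<^sub>R S)"
        unfolding sum_subtractf S_def by (simp add: sum_constant_scaleR)
      also have "\<dots> = 0" by simp
      finally show ?thesis unfolding S_def .
    qed
    also have "(\<Sum>i=1..n+1. w k i \<omega>) = 0" using step.IH .
    finally show ?case by simp
  qed
  show ?thesis
    unfolding Let_def
  proof (intro allI impI)
    fix zs ws assume sol: "ext_sol n A B zs ws"
    have wsA: "\<And>i. i \<in> {1..n} \<Longrightarrow> ws i \<in> A i zs" and wsB: "ws (n+1) = B zs"
      and sws: "(\<Sum>i=1..n+1. ws i) = 0" using sol unfolding ext_sol_def by auto
    have sw2: "(norm (\<Sum>i=1..n. ws i))\<^sup>2 = (norm (B zs))\<^sup>2"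
    proof -
      have "(\<Sum>i=1..n. ws i) + ws (n+1) = 0" using sws by (simp add: sum.cl_ivl_Suc)
      then have "(\<Sum>i=1..n. ws i) = - B zs" using wsB by (simp add: eq_neg_iff_add_eq_0)
      then show ?thesis by simp
    qed
    have Nge: "N1 \<le> N" "N2 \<le> N" "N3 \<le> N" "N4 \<le> N" "0 \<le> N" using N_def N_nonneg by auto
    show "AE \<omega> in M. \<forall>k\<ge>1.
        nn_cond_exp M (F k) (\<lambda>\<omega>. ennreal (ext_dist2 n (z (k+1) \<omega>) (\<lambda>i. w (k+1) i \<omega>) zs ws)) \<omega>
        \<le> ennreal ((1 + C1 * (\<alpha> k)\<^sup>2 + C3 * \<alpha> k * (\<rho> k)\<^sup>2) * ext_dist2 n (z k \<omega>) (\<lambda>i. w k i \<omega>) zs ws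
             - \<alpha> k * \<rho> k *
                 ((\<tau> / \<rho>b) * (\<Sum>i=1..n. (norm (y k i \<omega> - w k i \<omega>))\<^sup>2)
                  + (1 / (\<rho>b * \<tau>)) * (\<Sum>i=1..n. (norm (z k \<omega> - x k i \<omega>))\<^sup>2)
                  + 2 * (1 - \<rho>b * L) * (norm (B (z k \<omega>) - w k (n+1) \<omega>))\<^sup>2)
             + (16 * (N + 1) * (1 + 4 * \<rho>b\<^sup>2 * real (n+1) + 9 * \<rho>b\<^sup>2 * L\<^sup>2 * (N + 1)) * (norm (B zs))\<^sup>2
              + 8 * (norm (\<Sum>i=1..n. ws i))\<^sup>2
              + 12 * \<rho>b\<^sup>2 * N * (2 * L\<^sup>2 * (N + 1) + real (n+1)) + 4 * N) * (\<alpha> k)\<^sup>2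
             + (2 * N * L * (1 + 2 * (norm (B zs))\<^sup>2)) * \<alpha> k * (\<rho> k)\<^sup>2)"
    proof (subst AE_all_countable, intro allI)
      fix k
      show "AE \<omega> in M. k \<ge> 1 \<longrightarrow>
        nn_cond_exp M (F k) (\<lambda>\<omega>. ennreal (ext_dist2 n (z (k+1) \<omega>) (\<lambda>i. w (k+1) i \<omega>) zs ws)) \<omega>
        \<le> ennreal ((1 + C1 * (\<alpha> k)\<^sup>2 + C3 * \<alpha> k * (\<rho> k)\<^sup>2) * ext_dist2 n (z k \<omega>) (\<lambda>i. w k i \<omega>) zs ws
             - \<alpha> k * \<rho> k *
                 ((\<tau> / \<rho>b) * (\<Sum>i=1..n. (norm (y k i \<omega> - w k i \<omega>))\<^sup>2)
                  + (1 / (\<rho>b * \<tau>)) * (\<Sum>i=1..n. (norm (z k \<omega> - x k i \<omega>))\<^sup>2)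
                  + 2 * (1 - \<rho>b * L) * (norm (B (z k \<omega>) - w k (n+1) \<omega>))\<^sup>2)
             + (16 * (N + 1) * (1 + 4 * \<rho>b\<^sup>2 * real (n+1) + 9 * \<rho>b\<^sup>2 * L\<^sup>2 * (N + 1)) * (norm (B zs))\<^sup>2
              + 8 * (norm (\<Sum>i=1..n. ws i))\<^sup>2
              + 12 * \<rho>b\<^sup>2 * N * (2 * L\<^sup>2 * (N + 1) + real (n+1)) + 4 * N) * (\<alpha> k)\<^sup>2
             + (2 * N * L * (1 + 2 * (norm (B zs))\<^sup>2)) * \<alpha> k * (\<rho> k)\<^sup>2)"
      proof (cases "k \<ge> 1")
        case False then show ?thesis by simp
      next
        case True
        note k = True
        define Xs where "Xs = {z j | j. 1 \<le> j \<and> j \<le> k} \<union> {w j i | j i. 1 \<le> j \<and> j \<le> k \<and> 1 \<le> i \<and> i \<le> n+1}"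
        have Fk: "F k = gen_sigma M Xs" using F_def unfolding Xs_def by simp
        have FEk: "FE k = gen_sigma M (Xs \<union> {eps k})" using FE_def unfolding Xs_def by simp
        have XsM: "X \<in> borel_measurable M" if "X \<in> Xs" for X
          using that meas unfolding Xs_def by auto
        have subF: "subalgebra M (F k)" unfolding Fk by (rule gen_sigma_sub) (rule XsM)
        have subFE: "subalgebra M (FE k)" unfolding FEk by (rule gen_sigma_sub) (use XsM noise_rv k in auto)
        have FFE: "sets (F k) \<subseteq> sets (FE k)" unfolding Fk FEk by (rule gen_sigma_mono) auto
        have zF[measurable]: "z k \<in> borel_measurable (F k)" unfolding Fk by (rule gen_sigma_meas) (use k in \<open>auto simp: Xs_def\<close>)
        have wF: "w k i \<in> borel_measurable (F k)" if "i \<in> {1..n+1}" for i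
          unfolding Fk by (rule gen_sigma_meas) (use k that in \<open>auto simp: Xs_def\<close>)
        have wnF[measurable]: "w k (n+1) \<in> borel_measurable (F k)" using wF by simp
        have xyF: "x k i \<in> borel_measurable (F k) \<and> y k i \<in> borel_measurable (F k)" if i: "i \<in> {1..n}" for i
          using mxy[OF k i zF wF] i by auto
        have BzF[measurable]: "(\<lambda>\<omega>. B (z k \<omega>)) \<in> borel_measurable (F k)" by (rule mB[OF zF])
        have sF1[measurable]: "(\<lambda>\<omega>. \<Sum>i=1..n. (norm (y k i \<omega> - w k i \<omega>))\<^sup>2) \<in> borel_measurable (F k)"
        proof (rule borel_measurable_sum)
          fix i assume i: "i \<in> {1..n}"
          have [measurable]: "y k i \<in> borel_measurable (F k)" "w k i \<in> borel_measurable (F k)" using xyF[OF i] wF i by auto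
          show "(\<lambda>\<omega>. (norm (y k i \<omega> - w k i \<omega>))\<^sup>2) \<in> borel_measurable (F k)" by measurable
        qed
        have sF2[measurable]: "(\<lambda>\<omega>. \<Sum>i=1..n. y k i \<omega> - w k i \<omega>) \<in> borel_measurable (F k)"
        proof (rule borel_measurable_sum)
          fix i assume i: "i \<in> {1..n}"
          have [measurable]: "y k i \<in> borel_measurable (F k)" "w k i \<in> borel_measurable (F k)" using xyF[OF i] wF i by auto
          show "(\<lambda>\<omega>. y k i \<omega> - w k i \<omega>) \<in> borel_measurable (F k)" by measurable
        qed
        have sF3[measurable]: "(\<lambda>\<omega>. \<Sum>i=1..n. (norm (z k \<omega> - x k i \<omega>))\<^sup>2) \<in> borel_measurable (F k)"
        proof (rule borel_measurable_sum)
          fix i assume i: "i \<in> {1..n}"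
          have [measurable]: "x k i \<in> borel_measurable (F k)" using xyF[OF i] by auto
          show "(\<lambda>\<omega>. (norm (z k \<omega> - x k i \<omega>))\<^sup>2) \<in> borel_measurable (F k)" by measurable
        qed
        have dF[measurable]: "(\<lambda>\<omega>. ext_dist2 n (z k \<omega>) (\<lambda>i. w k i \<omega>) zs ws) \<in> borel_measurable (F k)"
          by (rule meas_ext_dist2[OF zF wF])
        have k1: "k + 1 \<ge> 1" by simp
        have QM: "(\<lambda>\<omega>. ext_dist2 n (z (k+1) \<omega>) (\<lambda>i. w (k+1) i \<omega>) zs ws) \<in> borel_measurable M"
          by (rule meas_ext_dist2) (use meas[OF k1] in auto)
        have epsM[measurable]: "eps k \<in> borel_measurable M" and eM[measurable]: "e k \<in> borel_measurable M"
          using noise_rv k by auto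
        define cV where "cV = - 2 * \<alpha> k * \<rho> k * (1 - 2 * L * \<rho> k) + 2 * (\<alpha> k)\<^sup>2 * (4 * L\<^sup>2 + 1) * (\<rho> k)\<^sup>2"
        define cs where "cs = 2 * \<alpha> k * L * (\<rho> k)\<^sup>2 + (\<alpha> k)\<^sup>2 * (4 * L\<^sup>2 + 1) * (\<rho> k)\<^sup>2"
        define ce where "ce = 4 * (\<alpha> k)\<^sup>2"
        define R2 where "R2 = 4 * N4 * L\<^sup>2 * (\<rho> k)\<^sup>2"
        define Qf where "Qf = (\<lambda>\<omega>. ext_dist2 n (z (k+1) \<omega>) (\<lambda>i. w (k+1) i \<omega>) zs ws)"
        define Pf where "Pf = (\<lambda>\<omega>. ext_dist2 n (z k \<omega>) (\<lambda>i. w k i \<omega>) zs ws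
              - 2 * \<alpha> k * \<tau> * (\<Sum>i=1..n. (norm (y k i \<omega> - w k i \<omega>))\<^sup>2)
              - 2 * \<alpha> k * \<rho> k * (1 - L * \<rho> k) * (norm (B (z k \<omega>) - w k (n+1) \<omega>))\<^sup>2
              + (\<alpha> k)\<^sup>2 * (2 * (norm ((\<Sum>i=1..n. y k i \<omega> - w k i \<omega>) + (B (z k \<omega>) - w k (n+1) \<omega>)))\<^sup>2
                     + \<tau>\<^sup>2 * (\<Sum>i=1..n. (norm (y k i \<omega> - w k i \<omega>))\<^sup>2)
                     + (4 * L\<^sup>2 + 1) * (\<rho> k)\<^sup>2 * (norm (B (z k \<omega>) - w k (n+1) \<omega>))\<^sup>2))"
        define Vf where "Vf = (\<lambda>\<omega>. cV *\<^sub>R (B (z k \<omega>) - w k (n+1) \<omega>))"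
        define Uf where "Uf = (\<lambda>\<omega>. (- 2 * \<alpha> k) *\<^sub>R (z k \<omega> - zs))"
        define Sbf where "Sbf = (\<lambda>\<omega>. N1 + N2 * (norm (B (z k \<omega>)))\<^sup>2)"
        define Rbf where "Rbf = (\<lambda>\<omega>. N3 + N4 * (norm (B (x k (n+1) \<omega>)))\<^sup>2)"
        define R1f where "R1f = (\<lambda>\<omega>. N4 * (8 * L\<^sup>2 * (norm (z k \<omega> - zs))\<^sup>2 + 8 * L\<^sup>2 * (\<rho> k)\<^sup>2 * (norm (B (z k \<omega>) - w k (n+1) \<omega>))\<^sup>2
                 + 2 * (norm (B zs))\<^sup>2) + N3)"
        define Hf where "Hf = (\<lambda>\<omega>. (1 + C1 * (\<alpha> k)\<^sup>2 + C3 * \<alpha> k * (\<rho> k)\<^sup>2) * ext_dist2 n (z k \<omega>) (\<lambda>i. w k i \<omega>) zs ws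
             - \<alpha> k * \<rho> k *
                 ((\<tau> / \<rho>b) * (\<Sum>i=1..n. (norm (y k i \<omega> - w k i \<omega>))\<^sup>2)
                  + (1 / (\<rho>b * \<tau>)) * (\<Sum>i=1..n. (norm (z k \<omega> - x k i \<omega>))\<^sup>2)
                  + 2 * (1 - \<rho>b * L) * (norm (B (z k \<omega>) - w k (n+1) \<omega>))\<^sup>2)
             + (16 * (N + 1) * (1 + 4 * \<rho>b\<^sup>2 * real (n+1) + 9 * \<rho>b\<^sup>2 * L\<^sup>2 * (N + 1)) * (norm (B zs))\<^sup>2
              + 8 * (norm (\<Sum>i=1..n. ws i))\<^sup>2
              + 12 * \<rho>b\<^sup>2 * N * (2 * L\<^sup>2 * (N + 1) + real (n+1)) + 4 * N) * (\<alpha> k)\<^sup>2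
             + (2 * N * L * (1 + 2 * (norm (B zs))\<^sup>2)) * \<alpha> k * (\<rho> k)\<^sup>2)"
        have m1: "Qf \<in> borel_measurable M" unfolding Qf_def by (rule QM)
        have m2: "Pf \<in> borel_measurable (F k)" unfolding Pf_def by measurable
        have m3: "Vf \<in> borel_measurable (F k)" unfolding Vf_def by measurable
        have m4: "Uf \<in> borel_measurable (F k)" unfolding Uf_def by measurable
        have m5: "Sbf \<in> borel_measurable (F k)" unfolding Sbf_def by measurable
        have m6: "R1f \<in> borel_measurable (F k)" unfolding R1f_def by measurable
        have m7: "Hf \<in> borel_measurable (F k)" unfolding Hf_def by measurable
        have nc: "AE \<omega> in M. (\<forall>b\<in>Basis. real_cond_exp M (F k) (\<lambda>\<omega>. inner (eps k \<omega>) b) \<omega> = 0)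
           \<and> (\<forall>b\<in>Basis. real_cond_exp M (F k) (\<lambda>\<omega>. inner (e k \<omega>) b) \<omega> = 0)
           \<and> nn_cond_exp M (F k) (\<lambda>\<omega>. ennreal ((norm (eps k \<omega>))\<^sup>2)) \<omega>
                \<le> ennreal (N1 + N2 * (norm (B (z k \<omega>)))\<^sup>2)
           \<and> nn_cond_exp M (FE k) (\<lambda>\<omega>. ennreal ((norm (e k \<omega>))\<^sup>2)) \<omega>
                \<le> ennreal (N3 + N4 * (norm (B (x k (n+1) \<omega>)))\<^sup>2)"
          using noise_cond by eventually_elim (use k in blast)
        have ce0: "AE \<omega> in M. \<forall>b\<in>Basis. real_cond_exp M (F k) (\<lambda>\<omega>. inner (eps k \<omega>) b) \<omega> = 0"
          using nc by eventually_elim blast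
        have ce1: "AE \<omega> in M. \<forall>b\<in>Basis. real_cond_exp M (F k) (\<lambda>\<omega>. inner (e k \<omega>) b) \<omega> = 0"
          using nc by eventually_elim blast
        have Sbnd: "AE \<omega> in M. nn_cond_exp M (F k) (\<lambda>\<omega>. ennreal ((norm (eps k \<omega>))\<^sup>2)) \<omega> \<le> ennreal (Sbf \<omega>)"
          using nc unfolding Sbf_def by eventually_elim blast
        have Rbnd: "AE \<omega> in M. nn_cond_exp M (FE k) (\<lambda>\<omega>. ennreal ((norm (e k \<omega>))\<^sup>2)) \<omega> \<le> ennreal (Rbf \<omega>)"
          using nc unfolding Rbf_def by eventually_elim blast
        have inte: "integrable M (eps k)" "integrable M (e k)" using noise_int k by auto
        have rho: "0 < \<rho> k" "\<rho> k \<le> \<rho>b" using rho_bd k by auto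
        have alp: "0 < \<alpha> k" using alpha_pos k by auto
        have R20: "R2 \<ge> 0" unfolding R2_def using N_nonneg by simp
        have cs0: "cs \<ge> 0" unfolding cs_def using alp rho L_pos by simp
        have ce0': "ce \<ge> 0" unfolding ce_def by simp
        have Sb0: "\<And>\<omega>. 0 \<le> Sbf \<omega>" unfolding Sbf_def using N_nonneg by simp
        have R10: "\<And>\<omega>. 0 \<le> R1f \<omega>" unfolding R1f_def using N_nonneg by simp
        have Q0: "\<And>\<omega>. 0 \<le> Qf \<omega>" unfolding Qf_def ext_dist2_def by (simp add: sum_nonneg)
        have Rb_le: "Rbf \<omega> \<le> R1f \<omega> + R2 * (norm (eps k \<omega>))\<^sup>2" for \<omega>
        proof -
          have "(norm (B (x k (n+1) \<omega>)))\<^sup>2 \<le> 8 * L\<^sup>2 * (norm (z k \<omega> - zs))\<^sup>2 + 8 * L\<^sup>2 * (\<rho> k)\<^sup>2 * (norm (B (z k \<omega>) - w k (n+1) \<omega>))\<^sup>2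
            + 4 * L\<^sup>2 * (\<rho> k)\<^sup>2 * (norm (eps k \<omega>))\<^sup>2 + 2 * (norm (B zs))\<^sup>2"
            by (rule Bxm_bound[OF B_lip]) (use alg_xn k in blast)
          then have "N4 * (norm (B (x k (n+1) \<omega>)))\<^sup>2 \<le> N4 * (8 * L\<^sup>2 * (norm (z k \<omega> - zs))\<^sup>2 + 8 * L\<^sup>2 * (\<rho> k)\<^sup>2 * (norm (B (z k \<omega>) - w k (n+1) \<omega>))\<^sup>2
            + 4 * L\<^sup>2 * (\<rho> k)\<^sup>2 * (norm (eps k \<omega>))\<^sup>2 + 2 * (norm (B zs))\<^sup>2)"
            by (rule mult_left_mono) (use N_nonneg in simp)
          then show ?thesis unfolding Rbf_def R1f_def R2_def by (simp add: algebra_simps)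
        qed
        have rf: "y k i \<omega> \<in> A i (x k i \<omega>) \<and> z k \<omega> + \<tau> *\<^sub>R w k i \<omega> = x k i \<omega> + \<tau> *\<^sub>R y k i \<omega>
            \<and> norm (y k i \<omega> - w k i \<omega>) \<le> norm (z k \<omega> - zs) / \<tau> + 2 * norm (w k i \<omega> - ws i)"
          if i: "i \<in> {1..n}" for i \<omega>
        proof -
          have xd: "x k i \<omega> = resolvent \<tau> (A i) (z k \<omega> + \<tau> *\<^sub>R w k i \<omega>)" using alg_x k i by blast
          have yd: "y k i \<omega> = (1 / \<tau>) *\<^sub>R ((z k \<omega> + \<tau> *\<^sub>R w k i \<omega>) - x k i \<omega>)" using alg_y k i by blast
          show ?thesis using resolvent_facts[OF A_mm[rule_format, OF i] tau_pos wsA[OF i] xd yd] by blast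
        qed
        have Qle: "Qf \<omega> \<le> Pf \<omega> + inner (eps k \<omega>) (Vf \<omega>) + cs * (norm (eps k \<omega>))\<^sup>2 + inner (e k \<omega>) (Uf \<omega>) + ce * (norm (e k \<omega>))\<^sup>2" for \<omega>
        proof -
          have tx: "z k \<omega> + \<tau> *\<^sub>R w k i \<omega> = x k i \<omega> + \<tau> *\<^sub>R y k i \<omega>" if "i \<in> {1..n}" for i using rf[OF that] by blast
          have mon: "inner (y k i \<omega> - ws i) (x k i \<omega> - zs) \<ge> 0" if i: "i \<in> {1..n}" for i
          proof -
            have "monotone_op (A i)" using A_mm i unfolding maximal_monotone_def by blast
            then show ?thesis using rf[OF i] wsA[OF i] unfolding monotone_op_def by blast
          qed
          have Bmon: "inner (B (x k (n+1) \<omega>) - B zs) (x k (n+1) \<omega> - zs) \<ge> 0" using B_mono unfolding monotone_fun_def by blast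
          have Blip: "norm (B (x k (n+1) \<omega>) - B (z k \<omega>)) \<le> L * norm (x k (n+1) \<omega> - z k \<omega>)" by (rule lip_le[OF B_lip])
          have xn: "x k (n+1) \<omega> = z k \<omega> - \<rho> k *\<^sub>R ((B (z k \<omega>) + eps k \<omega>) - w k (n+1) \<omega>)" using alg_xn k by blast
          have yn: "y k (n+1) \<omega> = B (x k (n+1) \<omega>) + e k \<omega>" using alg_yn k by blast
          have al0: "\<alpha> k \<ge> 0" and rh0: "\<rho> k \<ge> 0" using alp rho by auto
          note sp = step_pointwise[where z="z k \<omega>" and zs=zs and ep="eps k \<omega>" and e="e k \<omega>" and w="\<lambda>i. w k i \<omega>"
              and ws=ws and x="\<lambda>i. x k i \<omega>" and y="\<lambda>i. y k i \<omega>" and B=B and \<alpha>="\<alpha> k" and \<rho>="\<rho> k" and \<tau>=\<tau> and L=L and n=n,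
              OF n sumw[OF k] sws wsB tx mon xn yn Bmon Blip al0 rh0 L0]
          have Qeq: "Qf \<omega> = ext_dist2 n (z k \<omega> - \<alpha> k *\<^sub>R (\<Sum>i=1..n+1. y k i \<omega>))
            (\<lambda>i. w k i \<omega> - \<alpha> k *\<^sub>R (x k i \<omega> - (1 / real (n+1)) *\<^sub>R (\<Sum>j=1..n+1. x k j \<omega>))) zs ws"
          proof -
            have "z (k+1) \<omega> = z k \<omega> - \<alpha> k *\<^sub>R (\<Sum>i=1..n+1. y k i \<omega>)" using alg_z k by blast
            moreover have "ext_dist2 n (z (k+1) \<omega>) (\<lambda>i. w (k+1) i \<omega>) zs ws = ext_dist2 n (z (k+1) \<omega>)
              (\<lambda>i. w k i \<omega> - \<alpha> k *\<^sub>R (x k i \<omega> - (1 / real (n+1)) *\<^sub>R (\<Sum>j=1..n+1. x k j \<omega>))) zs ws"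
              by (rule ext_dist2_cong) (use alg_w k in blast)
            ultimately show ?thesis unfolding Qf_def by simp
          qed
          show ?thesis unfolding Qeq Pf_def Vf_def Uf_def cs_def ce_def cV_def by (rule sp)
        qed
        have Hge: "Pf \<omega> + cs * Sbf \<omega> + ce * (R1f \<omega> + R2 * Sbf \<omega>) \<le> Hf \<omega>" for \<omega>
        proof -
          have al0: "0 \<le> \<alpha> k" and rh0: "0 \<le> \<rho> k" using alp rho by auto
          have n1: "1 \<le> n" using n .
          have Ns: "0 \<le> N3" "N3 \<le> N" "0 \<le> N4" "N4 \<le> N" "0 \<le> N" using N_nonneg Nge by auto
          have Deq: "ext_dist2 n (z k \<omega>) (\<lambda>i. w k i \<omega>) zs ws = (norm (z k \<omega> - zs))\<^sup>2 + (\<Sum>i=1..n. (norm (w k i \<omega> - ws i))\<^sup>2) + (norm (w k (n+1) \<omega> - ws (n+1)))\<^sup>2"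
            by (rule ext_dist2_split)
          have SY0: "0 \<le> (\<Sum>i=1..n. (norm (y k i \<omega> - w k i \<omega>))\<^sup>2)" by (simp add: sum_nonneg)
          have Sxeq: "(\<Sum>i=1..n. (norm (z k \<omega> - x k i \<omega>))\<^sup>2) = \<tau>\<^sup>2 * (\<Sum>i=1..n. (norm (y k i \<omega> - w k i \<omega>))\<^sup>2)"
            unfolding sum_distrib_left
          proof (rule sum.cong[OF refl])
            fix i assume i: "i \<in> {1..n}"
            have "z k \<omega> - x k i \<omega> = \<tau> *\<^sub>R (y k i \<omega> - w k i \<omega>)" using rf[OF i] by (simp add: algebra_simps)
            then show "(norm (z k \<omega> - x k i \<omega>))\<^sup>2 = \<tau>\<^sup>2 * (norm (y k i \<omega> - w k i \<omega>))\<^sup>2"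
              using tau_pos by (simp add: power_mult_distrib)
          qed
          have Sb0': "0 \<le> N1 + N2 * (norm (B (z k \<omega>)))\<^sup>2" using N_nonneg by simp
          have SYb: "(\<Sum>i=1..n. (norm (y k i \<omega> - w k i \<omega>))\<^sup>2) \<le> 2 * real n * (norm (z k \<omega> - zs))\<^sup>2 / \<tau>\<^sup>2 + 8 * (\<Sum>i=1..n. (norm (w k i \<omega> - ws i))\<^sup>2)"
          proof -
            have "(\<Sum>i=1..n. (norm (y k i \<omega> - w k i \<omega>))\<^sup>2) \<le> 2 * real n * (norm (z k \<omega> - zs) / \<tau>)\<^sup>2 + 8 * (\<Sum>i=1..n. (norm (w k i \<omega> - ws i))\<^sup>2)"
              by (rule SY_sum_bound[where Y="\<lambda>i. y k i \<omega> - w k i \<omega>" and W="\<lambda>i. w k i \<omega> - ws i"])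
                 (use rf tau_pos in auto)
            then show ?thesis by (simp add: power_divide)
          qed
          have G2b: "(norm (B (z k \<omega>) - w k (n+1) \<omega>))\<^sup>2 \<le> 2 * L\<^sup>2 * (norm (z k \<omega> - zs))\<^sup>2 + 2 * (norm (w k (n+1) \<omega> - ws (n+1)))\<^sup>2"
            using G2_bound[OF B_lip L0, of "z k \<omega>" "w k (n+1) \<omega>" zs] wsB by simp
          have Sbb: "N1 + N2 * (norm (B (z k \<omega>)))\<^sup>2 \<le> N + 2 * N * L\<^sup>2 * (norm (z k \<omega> - zs))\<^sup>2 + 2 * N * (norm (B zs))\<^sup>2"
          proof -
            have "N2 * (norm (B (z k \<omega>)))\<^sup>2 \<le> N * (norm (B (z k \<omega>)))\<^sup>2" using Nge by (simp add: mult_right_mono)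
            also have "\<dots> \<le> N * (2 * L\<^sup>2 * (norm (z k \<omega> - zs))\<^sup>2 + 2 * (norm (B zs))\<^sup>2)"
              using Bz_bound[OF B_lip, of "z k \<omega>" zs] Nge by (simp add: mult_left_mono)
            finally show ?thesis using Nge by (simp add: algebra_simps)
          qed
          have V12b: "(norm ((\<Sum>i=1..n. y k i \<omega> - w k i \<omega>) + (B (z k \<omega>) - w k (n+1) \<omega>)))\<^sup>2
              \<le> real (n+1) * ((\<Sum>i=1..n. (norm (y k i \<omega> - w k i \<omega>))\<^sup>2) + (norm (B (z k \<omega>) - w k (n+1) \<omega>))\<^sup>2)"
            by (rule V1_bound)
          note fi = final_ineq[where \<alpha>="\<alpha> k" and \<rho>="\<rho> k" and \<rho>b=\<rho>b and \<tau>=\<tau> and L=L and N=N and Nc=N3 and Nd=N4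
              and Ca=C1 and Cc=C3 and D="ext_dist2 n (z k \<omega>) (\<lambda>i. w k i \<omega>) zs ws"
              and SY="\<Sum>i=1..n. (norm (y k i \<omega> - w k i \<omega>))\<^sup>2" and Sx="\<Sum>i=1..n. (norm (z k \<omega> - x k i \<omega>))\<^sup>2"
              and GG="(norm (B (z k \<omega>) - w k (n+1) \<omega>))\<^sup>2"
              and VV="(norm ((\<Sum>i=1..n. y k i \<omega> - w k i \<omega>) + (B (z k \<omega>) - w k (n+1) \<omega>)))\<^sup>2"
              and Sb="N1 + N2 * (norm (B (z k \<omega>)))\<^sup>2"
              and RR="N4 * (8 * L\<^sup>2 * (norm (z k \<omega> - zs))\<^sup>2 + 8 * L\<^sup>2 * (\<rho> k)\<^sup>2 * (norm (B (z k \<omega>) - w k (n+1) \<omega>))\<^sup>2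
                 + 2 * (norm (B zs))\<^sup>2) + N3"
              and aa="(norm (z k \<omega> - zs))\<^sup>2" and Dn="\<Sum>i=1..n. (norm (w k i \<omega> - ws i))\<^sup>2"
              and dd="(norm (w k (n+1) \<omega> - ws (n+1)))\<^sup>2" and bb="(norm (B zs))\<^sup>2"
              and sww="(norm (\<Sum>i=1..n. ws i))\<^sup>2" and n=n,
              OF al0 rh0 rho(2) tau_pos L_pos n1 Ns _ _ _ _ Deq SY0 Sxeq _ Sb0' SYb G2b Sbb V12b order_refl sw2 C1_def C3_def]
          show ?thesis unfolding Pf_def cs_def ce_def R1f_def R2_def Sbf_def Hf_def
            by (rule fi) (simp_all add: sum_nonneg)
        qed
        have cb: "AE \<omega> in M. nn_cond_exp M (F k) (\<lambda>\<omega>. ennreal (Qf \<omega>)) \<omega> \<le> ennreal (Hf \<omega>)"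
          by (rule core_bound[OF M subF subFE FFE m1 m2 m3 m4 m5 m6 m7 epsM eM inte ce0 ce1 Sbnd Rbnd Rb_le R20 cs0 ce0' Sb0 R10 Q0 Qle Hge])
        show ?thesis using cb unfolding Qf_def Hf_def by eventually_elim (rule impI)
      qed
    qed
  qed
qed

end
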